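(* Let $r\ge1$ be an integer, let $\Gamma$ be a finite graph without loops (multiple edges allowed; edges oriented if $r$ is odd), and let $\alpha\in E(\Gamma)$. Then the sequence \[ R^r(\Gamma\setminus\alpha)\xrightarrow{\ i_\alpha^R\ }R^r(\Gamma)\xrightarrow{\ g_\alpha^R\ }R^r(\Gamma/\alpha)\otimes e_\alpha\to0 \] is exact.
   Context: A circuit $w$ of length $k$ in a graph is an ordered sequence of edges $w_1,\dots,w_k$ with vertices $v_1,\dots,v_k,v_{k+1}=v_1$ such that $v_i,v_{i+1}$ are the endpoints of $w_i$; for $r$ odd, $\epsilon_i(w)=1$ if $w_i$ is oriented from $v_i$ to $v_{i+1}$ and $-1$ otherwise. $\Lambda^r(\Gamma)$: for $r$ even, the free graded-commutative $\mathbb{Z}$-algebra on generators $e_\beta$ of degree $r-1$, one per edge; for $r$ odd, the commutative graded $\mathbb{Z}$-algebra on such generators modulo $e_\beta^2=0$. Arnold class: $A(w)=\sum_i(-1)^i w_1\cdots\widehat{w_i}\cdots w_k$ ($r$ even), $A(w)=\sum_i\epsilon_i(w) w_1\cdots\widehat{w_i}\cdots w_k$ ($r$ odd), where $w_i$ stands for $e_{w_i}$; $A(w)=1$ for a one-edge circuit (loop). $I^r(\Gamma)$ is the ideal generated by Arnold classes and $R^r(\Gamma)=\Lambda^r(\Gamma)/I^r(\Gamma)$. $\Gamma\setminus\alpha$ is $\Gamma$ with $\alpha$ deleted; $\Gamma/\alpha$ is obtained by deleting $\alpha$ and identifying its endpoints; $[\eta]$ denotes the image of $\eta\ne\alpha$.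 $i_\alpha^R$ is induced by $e_\beta\mapsto e_\beta$. $\Lambda^r[e_\alpha]=\mathbb{Z}\oplus\mathbb{Z}e_\alpha$ (exterior algebra, $\deg e_\alpha=r-1$). Let $\psi_\alpha^\Lambda:\Lambda^r(\Gamma)\to\Lambda^r(\Gamma/\alpha)\otimes\Lambda^r[e_\alpha]$ be the ring map with $e_\eta\mapsto e_{[\eta]}\otimes1$ ($\eta\neq\alpha$), $e_\alpha\mapsto1\otimes e_\alpha$; let $\pi$ be the projection of $\Lambda^r(\Gamma/\alpha)\otimes\Lambda^r[e_\alpha]=(\Lambda^r(\Gamma/\alpha)\otimes1)\oplus(\Lambda^r(\Gamma/\alpha)\otimes e_\alpha)$ onto the second summand, and $g_\alpha^\Lambda=\pi\circ\psi_\alpha^\Lambda$. Then $g_\alpha^\Lambda(I^r(\Gamma))\subseteq I^r(\Gamma/\alpha)\otimes e_\alpha$, and $g_\alpha^R:R^r(\Gamma)\to R^r(\Gamma/\alpha)\otimes e_\alpha:=(\Lambda^r(\Gamma/\alpha)\otimes e_\alpha)/(I^r(\Gamma/\alpha)\otimes e_\alpha)$ is the induced map. *)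

theory Defs
  imports Main
begin

(* Concrete model of the algebra Lambda^r(Gamma) over Z.
   An element is a function from finite sets of edges (monomials) to integer
   coefficients: x S is the coefficient of e_S = e_{s_1} ... e_{s_k}, the
   product of the generators of S in increasing order of the (arbitrary)
   linear order on the edge type. *)

type_synonym 'e lam = "'e set \<Rightarrow> int"

definition in_lam :: "'e set \<Rightarrow> 'e lam \<Rightarrow> bool" where
  "in_lam E x \<longleftrightarrow> (\<forall>S. x S \<noteq> 0 \<longrightarrow> S \<subseteq> E)"

definition lzero :: "'e lam" where "lzero = (\<lambda>S. 0)"
definition lone :: "'e lam" where "lone = (\<lambda>S. if S = {} then 1 else 0)"
definition gen :: "'e \<Rightarrow> 'e lam" where "gen e = (\<lambda>S. if S = {e} then 1 else 0)"
definition ladd :: "'e lam \<Rightarrow> 'e lam \<Rightarrow> 'e lam" where "ladd x y = (\<lambda>S. x S + y S)"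
definition lsub :: "'e lam \<Rightarrow> 'e lam \<Rightarrow> 'e lam" where "lsub x y = (\<lambda>S. x S - y S)"
definition lscale :: "int \<Rightarrow> 'e lam \<Rightarrow> 'e lam" where "lscale c x = (\<lambda>S. c * x S)"

definition inv_count :: "('e::linorder) set \<Rightarrow> 'e set \<Rightarrow> nat" where
  "inv_count S T = card {(s, t). s \<in> S \<and> t \<in> T \<and> t < s}"

(* multiplication: generators of degree r-1; graded commutative with e^2 = 0.
   e_S * e_T = 0 if S, T intersect, else (-1)^((r-1)*inv(S,T)) e_{S \<union> T}. *)
definition lmult :: "nat \<Rightarrow> ('e::linorder) lam \<Rightarrow> 'e lam \<Rightarrow> 'e lam" where
  "lmult r x y = (\<lambda>U. \<Sum>S\<in>Pow U. x S * y (U - S) * (-1) ^ ((r - 1) * inv_count S (U - S)))"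

definition listprod :: "nat \<Rightarrow> ('e::linorder) list \<Rightarrow> 'e lam" where
  "listprod r ws = foldr (\<lambda>e acc. lmult r (gen e) acc) ws lone"

(* Graphs: finite edge set E, each edge e has endpoints src e, tgt e
   (orientation from src to tgt). *)

definition circuit :: "'e set \<Rightarrow> ('e \<Rightarrow> 'v) \<Rightarrow> ('e \<Rightarrow> 'v) \<Rightarrow> 'e list \<Rightarrow> 'v list \<Rightarrow> bool" where
  "circuit E src tgt ws vs \<longleftrightarrow> length ws \<ge> 1 \<and> length vs = length ws \<and> set ws \<subseteq> E \<and>
     (\<forall>i < length ws. {src (ws ! i), tgt (ws ! i)} = {vs ! i, vs ! ((i + 1) mod length ws)})"

definition eps :: "('e \<Rightarrow> 'v) \<Rightarrow> ('e \<Rightarrow> 'v) \<Rightarrow> 'e list \<Rightarrow> 'v list \<Rightarrow> nat \<Rightarrow> int" where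
  "eps src tgt ws vs i =
     (if src (ws ! i) = vs ! i \<and> tgt (ws ! i) = vs ! ((i + 1) mod length ws) then 1 else -1)"

definition remove_nth :: "nat \<Rightarrow> 'a list \<Rightarrow> 'a list" where
  "remove_nth i xs = take i xs @ drop (Suc i) xs"

(* Arnold class; indices are 0-based here, so (-1)^i of the paper becomes (-1)^(i+1) *)
definition arnold :: "nat \<Rightarrow> ('e \<Rightarrow> 'v) \<Rightarrow> ('e \<Rightarrow> 'v) \<Rightarrow> ('e::linorder) list \<Rightarrow> 'v list \<Rightarrow> 'e lam" where
  "arnold r src tgt ws vs =
     (if length ws = 1 then lone
      else (\<lambda>U. \<Sum>i<length ws.
              (if even r then (-1) ^ (i + 1) else eps src tgt ws vs i)
              * listprod r (remove_nth i ws) U))"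

inductive_set arnold_ideal :: "nat \<Rightarrow> ('e::linorder) set \<Rightarrow> ('e \<Rightarrow> 'v) \<Rightarrow> ('e \<Rightarrow> 'v) \<Rightarrow> 'e lam set"
  for r E src tgt where
  gen: "circuit E src tgt ws vs \<Longrightarrow> arnold r src tgt ws vs \<in> arnold_ideal r E src tgt"
| zero: "lzero \<in> arnold_ideal r E src tgt"
| add: "x \<in> arnold_ideal r E src tgt \<Longrightarrow> y \<in> arnold_ideal r E src tgt \<Longrightarrow> ladd x y \<in> arnold_ideal r E src tgt"
| lmul: "x \<in> arnold_ideal r E src tgt \<Longrightarrow> in_lam E y \<Longrightarrow> lmult r y x \<in> arnold_ideal r E src tgt"
| rmul: "x \<in> arnold_ideal r E src tgt \<Longrightarrow> in_lam E y \<Longrightarrow> lmult r x y \<in> arnold_ideal r E src tgt"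

(* Contraction Gamma/alpha: delete alpha, identify tgt alpha with src alpha.
   Edges of Gamma/alpha keep their names ([eta] = eta). *)
definition contr_vert :: "('e \<Rightarrow> 'v) \<Rightarrow> ('e \<Rightarrow> 'v) \<Rightarrow> 'e \<Rightarrow> 'v \<Rightarrow> 'v" where
  "contr_vert src tgt \<alpha> v = (if v = tgt \<alpha> then src \<alpha> else v)"

(* Lambda^r(Gamma/alpha) (x) Lambda^r[e_alpha]: pair (x0, x1) stands for
   x0 (x) 1 + x1 (x) e_alpha; graded (Koszul-sign) tensor product of algebras. *)
definition gradinv :: "nat \<Rightarrow> 'e lam \<Rightarrow> 'e lam" where
  "gradinv r b = (\<lambda>S. (-1) ^ ((r - 1) * card S) * b S)"

definition tmult :: "nat \<Rightarrow> ('e::linorder) lam \<times> 'e lam \<Rightarrow> 'e lam \<times> 'e lam \<Rightarrow> 'e lam \<times> 'e lam" where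
  "tmult r a b = (lmult r (fst a) (fst b),
                  ladd (lmult r (fst a) (snd b)) (lmult r (snd a) (gradinv r (fst b))))"

definition psi_gen :: "'e \<Rightarrow> 'e \<Rightarrow> 'e lam \<times> 'e lam" where
  "psi_gen \<alpha> e = (if e = \<alpha> then (lzero, lone) else (gen e, lzero))"

definition tlistprod :: "nat \<Rightarrow> 'e \<Rightarrow> ('e::linorder) list \<Rightarrow> 'e lam \<times> 'e lam" where
  "tlistprod r \<alpha> ws = foldr (\<lambda>e acc. tmult r (psi_gen \<alpha> e) acc) ws (lone, lzero)"

(* g_alpha = pi o psi_alpha, with Lambda(Gamma/alpha) (x) e_alpha identified with
   Lambda(Gamma/alpha) via x (x) e_alpha <-> x.  psi is the ring map extending
   psi_gen, evaluated on the basis monomials e_S (ordered products). *)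
definition g_map :: "nat \<Rightarrow> ('e::linorder) set \<Rightarrow> 'e \<Rightarrow> 'e lam \<Rightarrow> 'e lam" where
  "g_map r E \<alpha> x = (\<lambda>U. \<Sum>S\<in>Pow E. x S * snd (tlistprod r \<alpha> (sorted_list_of_set S)) U)"

end

theory Submission
  imports Defs
begin

definition sg :: "nat \<Rightarrow> nat \<Rightarrow> int" where "sg r n = (-1) ^ ((r - 1) * n)"

lemma sg_add: "sg r (a + b) = sg r a * sg r b"
  by (simp add: sg_def distrib_left power_add)

lemma sg_sq: "sg r a * sg r a = 1"
proof -
  have "sg r a * sg r a = (-1) ^ ((r - 1) * a + (r - 1) * a)" by (simp add: sg_def power_add)
  also have "\<dots> = 1" by simp
  finally show ?thesis .
qed

lemma sg_0[simp]: "sg r 0 = 1" by (simp add: sg_def)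

lemma sg_cases: "sg r a = 1 \<or> sg r a = -1"
  unfolding sg_def by (simp add: minus_one_power_iff)

definition fin :: "'e lam \<Rightarrow> bool" where "fin x \<longleftrightarrow> (\<forall>S. x S \<noteq> 0 \<longrightarrow> finite S)"

lemma in_lam_fin: "finite E \<Longrightarrow> in_lam E x \<Longrightarrow> fin x"
  unfolding in_lam_def fin_def using finite_subset by blast

lemma fin_inf: "fin x \<Longrightarrow> infinite S \<Longrightarrow> x S = 0"
  unfolding fin_def by blast

lemma inv_count_finite_set: "finite S \<Longrightarrow> finite T \<Longrightarrow> finite {(s, t). s \<in> S \<and> t \<in> T \<and> t < s}"
  by (rule finite_subset[of _ "S \<times> T"]) auto

lemma inv_count_union_left:
  assumes "finite A" "finite B" "finite C" "A \<inter> B = {}"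
  shows "inv_count (A \<union> B) C = inv_count A C + inv_count B C"
proof -
  have "{(s, t). s \<in> A \<union> B \<and> t \<in> C \<and> t < s} =
        {(s, t). s \<in> A \<and> t \<in> C \<and> t < s} \<union> {(s, t). s \<in> B \<and> t \<in> C \<and> t < s}" by auto
  moreover have "card ({(s, t). s \<in> A \<and> t \<in> C \<and> t < s} \<union> {(s, t). s \<in> B \<and> t \<in> C \<and> t < s})
     = card {(s, t). s \<in> A \<and> t \<in> C \<and> t < s} + card {(s, t). s \<in> B \<and> t \<in> C \<and> t < s}"
    by (rule card_Un_disjoint) (use assms in \<open>auto simp: inv_count_finite_set\<close>)
  ultimately show ?thesis unfolding inv_count_def by simp
qed

lemma inv_count_union_right:
  assumes "finite A" "finite B" "finite C" "B \<inter> C = {}"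
  shows "inv_count A (B \<union> C) = inv_count A B + inv_count A C"
proof -
  have "{(s, t). s \<in> A \<and> t \<in> B \<union> C \<and> t < s} =
        {(s, t). s \<in> A \<and> t \<in> B \<and> t < s} \<union> {(s, t). s \<in> A \<and> t \<in> C \<and> t < s}" by auto
  moreover have "card ({(s, t). s \<in> A \<and> t \<in> B \<and> t < s} \<union> {(s, t). s \<in> A \<and> t \<in> C \<and> t < s})
     = card {(s, t). s \<in> A \<and> t \<in> B \<and> t < s} + card {(s, t). s \<in> A \<and> t \<in> C \<and> t < s}"
    by (rule card_Un_disjoint) (use assms in \<open>auto simp: inv_count_finite_set\<close>)
  ultimately show ?thesis unfolding inv_count_def by simp
qed

lemma inv_count_empty[simp]: "inv_count {} T = 0" "inv_count S {} = 0"
  by (simp_all add: inv_count_def)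

lemma inv_count_swap:
  assumes "finite A" "finite B" "A \<inter> B = {}"
  shows "inv_count A B + inv_count B A = card A * card B"
proof -
  have fin1: "finite {(s, t). s \<in> A \<and> t \<in> B \<and> s < t}"
    by (rule finite_subset[of _ "A \<times> B"]) (auto simp: assms)
  have "{(s, t). s \<in> A \<and> t \<in> B \<and> t < s} \<union> {(s, t). s \<in> A \<and> t \<in> B \<and> s < t} = A \<times> B"
    using assms by (auto simp: disjoint_iff) (metis linorder_neqE)
  moreover have "card {(s, t). s \<in> B \<and> t \<in> A \<and> t < s} = card {(s, t). s \<in> A \<and> t \<in> B \<and> s < t}"
  proof -
    have "{(s, t). s \<in> A \<and> t \<in> B \<and> s < t} = prod.swap ` {(s, t). s \<in> B \<and> t \<in> A \<and> t < s}"
      by (auto simp: image_iff)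
    then show ?thesis by (simp add: card_image)
  qed
  moreover have "card ({(s, t). s \<in> A \<and> t \<in> B \<and> t < s} \<union> {(s, t). s \<in> A \<and> t \<in> B \<and> s < t})
     = card {(s, t). s \<in> A \<and> t \<in> B \<and> t < s} + card {(s, t). s \<in> A \<and> t \<in> B \<and> s < t}"
    by (rule card_Un_disjoint) (auto simp: inv_count_finite_set assms fin1)
  ultimately show ?thesis unfolding inv_count_def by (simp add: card_cartesian_product)
qed

lemma inv_count_single_right: "inv_count S {a} = card {s \<in> S. a < s}"
proof -
  have "{(s, t). s \<in> S \<and> t \<in> {a} \<and> t < s} = (\<lambda>s. (s, a)) ` {s \<in> S. a < s}" by auto
  then show ?thesis unfolding inv_count_def by (simp add: card_image inj_on_def)
qed

lemma inv_count_single_left: "inv_count {a} T = card {t \<in> T. t < a}"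
proof -
  have "{(s, t). s \<in> {a} \<and> t \<in> T \<and> t < s} = (\<lambda>t. (a, t)) ` {t \<in> T. t < a}" by auto
  then show ?thesis unfolding inv_count_def by (simp add: card_image inj_on_def)
qed

lemma lmult_infinite: "infinite U \<Longrightarrow> lmult r x y U = 0"
  by (simp add: lmult_def)

lemma fin_lmult[simp]: "fin (lmult r x y)"
  unfolding fin_def using lmult_infinite by blast

lemma lmult_ladd_left: "lmult r (ladd a b) c = ladd (lmult r a c) (lmult r b c)"
  by (rule ext) (simp add: lmult_def ladd_def algebra_simps sum.distrib)

lemma lmult_ladd_right: "lmult r c (ladd a b) = ladd (lmult r c a) (lmult r c b)"
  by (rule ext) (simp add: lmult_def ladd_def algebra_simps sum.distrib)

lemma lmult_lsub_left: "lmult r (lsub a b) c = lsub (lmult r a c) (lmult r b c)"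
  by (rule ext) (simp add: lmult_def lsub_def algebra_simps sum_subtractf)

lemma lmult_lsub_right: "lmult r c (lsub a b) = lsub (lmult r c a) (lmult r c b)"
  by (rule ext) (simp add: lmult_def lsub_def algebra_simps sum_subtractf)

lemma lmult_lscale_left: "lmult r (lscale k a) c = lscale k (lmult r a c)"
  by (rule ext) (simp add: lmult_def lscale_def algebra_simps sum_distrib_left)

lemma lmult_lscale_right: "lmult r c (lscale k a) = lscale k (lmult r c a)"
  by (rule ext) (simp add: lmult_def lscale_def algebra_simps sum_distrib_left)

lemma lmult_lzero[simp]: "lmult r lzero a = lzero" "lmult r a lzero = lzero"
  by (rule ext, simp add: lmult_def lzero_def)+

lemma lmult_lone_left: "fin x \<Longrightarrow> lmult r lone x = x"
proof (rule ext)
  fix U assume f: "fin x"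
  show "lmult r lone x U = x U"
  proof (cases "finite U")
    case True
    have "lmult r lone x U = (\<Sum>S\<in>Pow U. if S = {} then x (U - S) * (-1) ^ ((r - 1) * inv_count S (U - S)) else 0)"
      unfolding lmult_def lone_def by (rule sum.cong) auto
    also have "\<dots> = x U" using True by (simp add: sum.delta)
    finally show ?thesis .
  next
    case False then show ?thesis using f by (simp add: lmult_infinite fin_inf)
  qed
qed

lemma lmult_lone_right: "fin x \<Longrightarrow> lmult r x lone = x"
proof (rule ext)
  fix U assume f: "fin x"
  show "lmult r x lone U = x U"
  proof (cases "finite U")
    case True
    have "lmult r x lone U = (\<Sum>S\<in>Pow U. if S = U then x S * (-1) ^ ((r - 1) * inv_count S (U - S)) else 0)"
      unfolding lmult_def lone_def by (rule sum.cong) auto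
    also have "\<dots> = x U" using True by (simp add: sum.delta)
    finally show ?thesis .
  next
    case False then show ?thesis using f by (simp add: lmult_infinite fin_inf)
  qed
qed

lemma lmult_sg: "lmult r x y U = (\<Sum>S\<in>Pow U. x S * y (U - S) * sg r (inv_count S (U - S)))"
  by (simp add: lmult_def sg_def)

lemma lmult_assoc: "lmult r (lmult r x y) z = lmult r x (lmult r y z)"
proof (rule ext)
  fix U
  show "lmult r (lmult r x y) z U = lmult r x (lmult r y z) U"
  proof (cases "finite U")
    case False then show ?thesis by (simp add: lmult_infinite)
  next
    case fU: True
    define F where "F S B = x S * y B * z (U - S - B) * sg r (inv_count S B + inv_count S (U - S - B) + inv_count B (U - S - B))" for S B
    have "lmult r (lmult r x y) z U = (\<Sum>T\<in>Pow U. \<Sum>S\<in>Pow T. x S * y (T - S) * sg r (inv_count S (T - S)) * z (U - T) * sg r (inv_count T (U - T)))"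
      by (simp add: lmult_sg sum_distrib_right)
    also have "\<dots> = (\<Sum>T\<in>Pow U. \<Sum>S\<in>{S \<in> Pow U. S \<subseteq> T}. x S * y (T - S) * sg r (inv_count S (T - S)) * z (U - T) * sg r (inv_count T (U - T)))"
      by (rule sum.cong) (auto intro!: sum.cong)
    also have "\<dots> = (\<Sum>S\<in>Pow U. \<Sum>T\<in>{T \<in> Pow U. S \<subseteq> T}. x S * y (T - S) * sg r (inv_count S (T - S)) * z (U - T) * sg r (inv_count T (U - T)))"
      by (rule sum.swap_restrict) (auto simp: fU)
    also have "\<dots> = (\<Sum>S\<in>Pow U. \<Sum>B\<in>Pow (U - S). F S B)"
    proof (rule sum.cong[OF refl])
      fix S assume S: "S \<in> Pow U"
      have "(\<Sum>B\<in>Pow (U - S). F S B) = (\<Sum>T\<in>(\<lambda>B. S \<union> B) ` Pow (U - S). F S (T - S))"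
      proof (subst sum.reindex)
        show "inj_on (\<lambda>B. S \<union> B) (Pow (U - S))" by (auto simp: inj_on_def)
        show "sum (F S) (Pow (U - S)) = sum ((\<lambda>T. F S (T - S)) \<circ> (\<lambda>B. S \<union> B)) (Pow (U - S))"
          by (rule sum.cong) (auto intro!: arg_cong[where f="F S"])
      qed
      also have "(\<lambda>B. S \<union> B) ` Pow (U - S) = {T \<in> Pow U. S \<subseteq> T}"
      proof
        show "(\<lambda>B. S \<union> B) ` Pow (U - S) \<subseteq> {T \<in> Pow U. S \<subseteq> T}" using S by auto
        show "{T \<in> Pow U. S \<subseteq> T} \<subseteq> (\<lambda>B. S \<union> B) ` Pow (U - S)"
        proof
          fix T assume "T \<in> {T \<in> Pow U. S \<subseteq> T}"
          then have "T = S \<union> (T - S)" "T - S \<in> Pow (U - S)" by auto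
          then show "T \<in> (\<lambda>B. S \<union> B) ` Pow (U - S)" by blast
        qed
      qed
      finally have e: "(\<Sum>B\<in>Pow (U - S). F S B) = (\<Sum>T\<in>{T \<in> Pow U. S \<subseteq> T}. F S (T - S))" .
      show "(\<Sum>T\<in>{T \<in> Pow U. S \<subseteq> T}. x S * y (T - S) * sg r (inv_count S (T - S)) * z (U - T) * sg r (inv_count T (U - T))) = (\<Sum>B\<in>Pow (U - S). F S B)"
        unfolding e
      proof (rule sum.cong[OF refl])
        fix T assume T: "T \<in> {T \<in> Pow U. S \<subseteq> T}"
        have fin: "finite S" "finite (T - S)" "finite (U - T)" using S T fU by (auto intro: finite_subset)
        have "T = S \<union> (T - S)" using T by auto
        then have "inv_count T (U - T) = inv_count S (U - T) + inv_count (T - S) (U - T)"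
          using fin inv_count_union_left[of S "T - S" "U - T"] by auto
        moreover have "U - S - (T - S) = U - T" using T by auto
        ultimately show "x S * y (T - S) * sg r (inv_count S (T - S)) * z (U - T) * sg r (inv_count T (U - T)) = F S (T - S)"
          unfolding F_def by (simp add: sg_add algebra_simps)
      qed
    qed
    also have "\<dots> = lmult r x (lmult r y z) U"
    proof -
      have "lmult r x (lmult r y z) U = (\<Sum>S\<in>Pow U. \<Sum>B\<in>Pow (U - S). x S * (y B * z (U - S - B) * sg r (inv_count B (U - S - B))) * sg r (inv_count S (U - S)))"
        by (simp add: lmult_sg sum_distrib_left sum_distrib_right)
      also have "\<dots> = (\<Sum>S\<in>Pow U. \<Sum>B\<in>Pow (U - S). F S B)"
      proof (intro sum.cong refl)
        fix S B assume S: "S \<in> Pow U" and B: "B \<in> Pow (U - S)"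
        have fin: "finite S" "finite B" "finite (U - S - B)" using S B fU by (auto intro: finite_subset)
        have "U - S = B \<union> (U - S - B)" using B by auto
        then have "inv_count S (U - S) = inv_count S B + inv_count S (U - S - B)"
          using fin inv_count_union_right[of S B "U - S - B"] by auto
        then show "x S * (y B * z (U - S - B) * sg r (inv_count B (U - S - B))) * sg r (inv_count S (U - S)) = F S B"
          unfolding F_def by (simp add: sg_add algebra_simps)
      qed
      finally show ?thesis by simp
    qed
    finally show ?thesis .
  qed
qed

definition bas :: "'e set \<Rightarrow> 'e lam" where "bas A = (\<lambda>U. if U = A then 1 else 0)"

lemma gen_bas: "gen e = bas {e}" by (simp add: gen_def bas_def)
lemma lone_bas: "lone = bas {}" by (simp add: lone_def bas_def)

lemma fin_bas: "finite A \<Longrightarrow> fin (bas A)" by (simp add: fin_def bas_def)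
lemma fin_gen[simp]: "fin (gen e)" by (simp add: gen_def fin_def)
lemma fin_lone[simp]: "fin lone" by (simp add: lone_def fin_def)
lemma fin_lzero[simp]: "fin lzero" by (simp add: lzero_def fin_def)
lemma fin_ladd[simp]: "fin x \<Longrightarrow> fin y \<Longrightarrow> fin (ladd x y)" unfolding fin_def ladd_def by (metis add.left_neutral)
lemma fin_lsub[simp]: "fin x \<Longrightarrow> fin y \<Longrightarrow> fin (lsub x y)" unfolding fin_def lsub_def by (metis diff_self)
lemma fin_lscale[simp]: "fin x \<Longrightarrow> fin (lscale c x)" by (auto simp: fin_def lscale_def)

lemma lmult_bas:
  assumes "finite A" "finite B"
  shows "lmult r (bas A) (bas B) = (if A \<inter> B = {} then lscale (sg r (inv_count A B)) (bas (A \<union> B)) else lzero)"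
proof (rule ext)
  fix U
  show "lmult r (bas A) (bas B) U = (if A \<inter> B = {} then lscale (sg r (inv_count A B)) (bas (A \<union> B)) else lzero) U"
  proof (cases "finite U")
    case False
    then have "U \<noteq> A \<union> B" using assms by auto
    then show ?thesis using False by (simp add: lmult_infinite bas_def lscale_def lzero_def)
  next
    case True
    have "lmult r (bas A) (bas B) U = (\<Sum>S\<in>Pow U. if S = A then (if U - A = B then sg r (inv_count A (U - A)) else 0) else 0)"
      unfolding lmult_sg by (rule sum.cong) (auto simp: bas_def)
    also have "\<dots> = (if A \<subseteq> U then (if U - A = B then sg r (inv_count A (U - A)) else 0) else 0)"
      using True by (simp add: sum.delta)
    also have "\<dots> = (if A \<inter> B = {} then lscale (sg r (inv_count A B)) (bas (A \<union> B)) else lzero) U"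
      by (auto simp: lscale_def bas_def lzero_def)
    finally show ?thesis .
  qed
qed

lemma lmult_gen_gen: "lmult r (gen e) (gen e) = lzero"
  by (simp add: gen_bas lmult_bas)

definition hom :: "nat \<Rightarrow> 'e lam \<Rightarrow> bool" where "hom n x \<longleftrightarrow> (\<forall>S. x S \<noteq> 0 \<longrightarrow> card S = n)"

lemma hom_lzero[simp]: "hom n lzero" by (simp add: hom_def lzero_def)
lemma hom_lone[simp]: "hom 0 lone" by (simp add: hom_def lone_def)
lemma hom_gen[simp]: "hom 1 (gen e)" by (simp add: hom_def gen_def)
lemma hom_ladd[simp]: "hom n x \<Longrightarrow> hom n y \<Longrightarrow> hom n (ladd x y)" unfolding hom_def ladd_def by (metis add.left_neutral)
lemma hom_lsub[simp]: "hom n x \<Longrightarrow> hom n y \<Longrightarrow> hom n (lsub x y)" unfolding hom_def lsub_def by (metis diff_self)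
lemma hom_lscale[simp]: "hom n x \<Longrightarrow> hom n (lscale c x)" by (auto simp: hom_def lscale_def)
lemma hom_lmult: "hom m x \<Longrightarrow> hom n y \<Longrightarrow> hom (m + n) (lmult r x y)"
proof (unfold hom_def, intro allI impI)
  fix U assume hx: "\<forall>S. x S \<noteq> 0 \<longrightarrow> card S = m" and hy: "\<forall>S. y S \<noteq> 0 \<longrightarrow> card S = n"
    and nz: "lmult r x y U \<noteq> 0"
  then have fU: "finite U" using lmult_infinite by blast
  from nz obtain S where S: "S \<in> Pow U" "x S * y (U - S) * sg r (inv_count S (U - S)) \<noteq> 0"
    unfolding lmult_sg by (meson sum.not_neutral_contains_not_neutral)
  then have "card S = m" "card (U - S) = n" using hx hy by auto
  moreover have "card U = card S + card (U - S)" using S fU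
    by (metis PowD card_Diff_subset finite_subset le_add_diff_inverse card_mono)
  ultimately show "card U = m + n" by simp
qed

lemma lmult_comm_sum:
  "lmult r x y U = (\<Sum>T\<in>Pow U. y T * x (U - T) * sg r (inv_count T (U - T)) * sg r (card T * card (U - T)))"
proof (cases "finite U")
  case False then show ?thesis by (simp add: lmult_infinite)
next
  case True
  have bij: "bij_betw (\<lambda>T. U - T) (Pow U) (Pow U)"
    by (rule bij_betw_byWitness[where f'="\<lambda>T. U - T"]) auto
  have "lmult r x y U = (\<Sum>T\<in>Pow U. x (U - T) * y (U - (U - T)) * sg r (inv_count (U - T) (U - (U - T))))"
    unfolding lmult_sg by (rule sum.reindex_bij_betw[symmetric, OF bij])
  also have "\<dots> = (\<Sum>T\<in>Pow U. y T * x (U - T) * sg r (inv_count T (U - T)) * sg r (card T * card (U - T)))"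
  proof (rule sum.cong[OF refl])
    fix T assume T: "T \<in> Pow U"
    have e: "U - (U - T) = T" using T by auto
    have fT: "finite T" "finite (U - T)" using T True by (auto intro: finite_subset)
    have "inv_count (U - T) T + inv_count T (U - T) = card (U - T) * card T"
      using inv_count_swap[of "U - T" T] fT by auto
    then have "sg r (inv_count (U - T) T) * sg r (inv_count T (U - T)) = sg r (card T * card (U - T))"
      by (metis sg_add mult.commute)
    then have "sg r (inv_count (U - T) T) = sg r (inv_count T (U - T)) * sg r (card T * card (U - T))"
      by (metis (no_types, lifting) mult.assoc mult.commute mult.right_neutral sg_sq)
    then show "x (U - T) * y (U - (U - T)) * sg r (inv_count (U - T) (U - (U - T))) =
      y T * x (U - T) * sg r (inv_count T (U - T)) * sg r (card T * card (U - T))"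
      unfolding e by simp
  qed
  finally show ?thesis .
qed

lemma lmult_comm_hom:
  assumes "hom m x" "hom n y"
  shows "lmult r x y = lscale (sg r (m * n)) (lmult r y x)"
proof (rule ext)
  fix U
  have "lmult r x y U = (\<Sum>T\<in>Pow U. sg r (m * n) * (y T * x (U - T) * sg r (inv_count T (U - T))))"
    unfolding lmult_comm_sum
  proof (rule sum.cong[OF refl])
    fix T assume "T \<in> Pow U"
    show "y T * x (U - T) * sg r (inv_count T (U - T)) * sg r (card T * card (U - T)) =
          sg r (m * n) * (y T * x (U - T) * sg r (inv_count T (U - T)))"
    proof (cases "y T \<noteq> 0 \<and> x (U - T) \<noteq> 0")
      case True then have "card T = n" "card (U - T) = m" using assms by (auto simp: hom_def)
      then show ?thesis by (simp add: mult.commute)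
    next
      case False then show ?thesis by auto
    qed
  qed
  also have "\<dots> = lscale (sg r (m * n)) (lmult r y x) U"
    by (simp add: lscale_def lmult_sg sum_distrib_left)
  finally show "lmult r x y U = lscale (sg r (m * n)) (lmult r y x) U" .
qed

lemma gradinv_sg: "gradinv r x = (\<lambda>S. sg r (card S) * x S)" by (simp add: gradinv_def sg_def)

lemma gradinv_lmult: "gradinv r (lmult r x y) = lmult r (gradinv r x) (gradinv r y)"
proof (rule ext)
  fix U
  show "gradinv r (lmult r x y) U = lmult r (gradinv r x) (gradinv r y) U"
  proof (cases "finite U")
    case False then show ?thesis by (simp add: gradinv_def lmult_infinite)
  next
    case True
    have "gradinv r (lmult r x y) U = (\<Sum>S\<in>Pow U. sg r (card U) * (x S * y (U - S) * sg r (inv_count S (U - S))))"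
      by (simp add: gradinv_def lmult_sg sum_distrib_left sg_def)
    also have "\<dots> = lmult r (gradinv r x) (gradinv r y) U"
      unfolding lmult_sg
    proof (rule sum.cong[OF refl])
      fix S assume S: "S \<in> Pow U"
      have "card U = card S + card (U - S)" using S True
        by (metis PowD card_Diff_subset finite_subset le_add_diff_inverse card_mono)
      then show "sg r (card U) * (x S * y (U - S) * sg r (inv_count S (U - S))) =
         gradinv r x S * gradinv r y (U - S) * sg r (inv_count S (U - S))"
        by (simp add: gradinv_sg sg_add)
    qed
    finally show ?thesis .
  qed
qed


lemma gradinv_gradinv[simp]: "gradinv r (gradinv r x) = x"
  by (rule ext) (simp add: gradinv_sg mult.assoc[symmetric] sg_sq)

lemma gradinv_hom: "hom n x \<Longrightarrow> gradinv r x = lscale (sg r n) x"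
  by (rule ext) (auto simp: gradinv_sg lscale_def hom_def)

lemma gradinv_ladd: "gradinv r (ladd x y) = ladd (gradinv r x) (gradinv r y)"
  by (rule ext) (simp add: gradinv_sg ladd_def algebra_simps)
lemma gradinv_lsub: "gradinv r (lsub x y) = lsub (gradinv r x) (gradinv r y)"
  by (rule ext) (simp add: gradinv_sg lsub_def algebra_simps)
lemma gradinv_lscale: "gradinv r (lscale c x) = lscale c (gradinv r x)"
  by (rule ext) (simp add: gradinv_sg lscale_def algebra_simps)
lemma gradinv_lzero[simp]: "gradinv r lzero = lzero" by (rule ext) (simp add: gradinv_sg lzero_def)
lemma gradinv_lone[simp]: "gradinv r lone = lone" by (rule ext) (simp add: gradinv_sg lone_def)
lemma fin_gradinv[simp]: "fin x \<Longrightarrow> fin (gradinv r x)" by (auto simp: fin_def gradinv_sg)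

lemma lmult_gen_comm: "lmult r (gen e) y = lmult r (gradinv r y) (gen e)"
proof (rule ext)
  fix U
  show "lmult r (gen e) y U = lmult r (gradinv r y) (gen e) U"
    unfolding lmult_comm_sum[of r "gen e"] lmult_sg[of r "gradinv r y"]
    by (rule sum.cong[OF refl]) (auto simp: gen_def gradinv_sg)
qed

lemma in_lam_lzero[simp]: "in_lam E lzero" by (simp add: in_lam_def lzero_def)
lemma in_lam_lone[simp]: "in_lam E lone" by (simp add: in_lam_def lone_def)
lemma in_lam_gen: "e \<in> E \<Longrightarrow> in_lam E (gen e)" by (simp add: in_lam_def gen_def)
lemma in_lam_ladd[simp]: "in_lam E x \<Longrightarrow> in_lam E y \<Longrightarrow> in_lam E (ladd x y)" unfolding in_lam_def ladd_def by (metis add.left_neutral)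
lemma in_lam_lsub[simp]: "in_lam E x \<Longrightarrow> in_lam E y \<Longrightarrow> in_lam E (lsub x y)" unfolding in_lam_def lsub_def by (metis diff_self)
lemma in_lam_lscale[simp]: "in_lam E x \<Longrightarrow> in_lam E (lscale c x)" by (auto simp: in_lam_def lscale_def)
lemma in_lam_gradinv[simp]: "in_lam E x \<Longrightarrow> in_lam E (gradinv r x)" by (auto simp: in_lam_def gradinv_sg)
lemma in_lam_mono: "in_lam E x \<Longrightarrow> E \<subseteq> F \<Longrightarrow> in_lam F x" by (auto simp: in_lam_def)
lemma in_lam_lmult[simp]: "in_lam E x \<Longrightarrow> in_lam E y \<Longrightarrow> in_lam E (lmult r x y)"
proof (unfold in_lam_def, intro allI impI)
  fix U assume hx: "\<forall>S. x S \<noteq> 0 \<longrightarrow> S \<subseteq> E" and hy: "\<forall>S. y S \<noteq> 0 \<longrightarrow> S \<subseteq> E"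
    and nz: "lmult r x y U \<noteq> 0"
  from nz obtain S where S: "S \<in> Pow U" "x S * y (U - S) * sg r (inv_count S (U - S)) \<noteq> 0"
    unfolding lmult_sg by (meson sum.not_neutral_contains_not_neutral)
  then have "S \<subseteq> E" "U - S \<subseteq> E" using hx hy by auto
  then show "U \<subseteq> E" by blast
qed

lemma listprod_Nil[simp]: "listprod r [] = lone" by (simp add: listprod_def)
lemma listprod_Cons[simp]: "listprod r (e # ws) = lmult r (gen e) (listprod r ws)" by (simp add: listprod_def)
lemma fin_listprod[simp]: "fin (listprod r ws)" by (cases ws) auto
lemma listprod_append: "listprod r (as @ bs) = lmult r (listprod r as) (listprod r bs)"
  by (induction as) (auto simp: lmult_lone_left lmult_assoc)
lemma hom_listprod: "hom (length ws) (listprod r ws)"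
  by (induction ws) (auto dest: hom_lmult[OF hom_gen])
lemma in_lam_listprod: "set ws \<subseteq> E \<Longrightarrow> in_lam E (listprod r ws)"
  by (induction ws) (auto simp: in_lam_gen)

lemma listprod_sorted: "sorted_wrt (<) ws \<Longrightarrow> listprod r ws = bas (set ws)"
proof (induction ws)
  case Nil then show ?case by (simp add: lone_bas)
next
  case (Cons a ws)
  have "inv_count {a} (set ws) = 0"
    unfolding inv_count_single_left using Cons.prems by (auto simp: card_eq_0_iff)
  moreover have "{a} \<inter> set ws = {}" using Cons.prems by auto
  ultimately show ?case using Cons by (simp add: gen_bas lmult_bas lscale_def)
qed

lemma lmult_sum_right: "finite I \<Longrightarrow>
  lmult r c (\<lambda>U. \<Sum>i\<in>I. k i * g i U) = (\<lambda>U. \<Sum>i\<in>I. k i * lmult r c (g i) U)"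
  by (rule ext) (simp add: lmult_sg sum_distrib_left sum_distrib_right algebra_simps sum.swap[where A = I])

lemma lmult_sum_left: "finite I \<Longrightarrow>
  lmult r (\<lambda>U. \<Sum>i\<in>I. k i * g i U) c = (\<lambda>U. \<Sum>i\<in>I. k i * lmult r (g i) c U)"
  by (rule ext) (simp add: lmult_sg sum_distrib_left sum_distrib_right algebra_simps sum.swap[where A = I])

lemma remove_nth_Cons0[simp]: "remove_nth 0 (a # ws) = ws" by (simp add: remove_nth_def)
lemma remove_nth_ConsS[simp]: "remove_nth (Suc i) (a # ws) = a # remove_nth i ws" by (simp add: remove_nth_def)
lemma set_remove_nth: "set (remove_nth i ws) \<subseteq> set ws"
  unfolding remove_nth_def by (metis Un_subset_iff set_append set_drop_subset set_take_subset)
lemma length_remove_nth: "i < length ws \<Longrightarrow> length (remove_nth i ws) = length ws - 1"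
  unfolding remove_nth_def by simp

definition Dsum :: "nat \<Rightarrow> (nat \<Rightarrow> int) \<Rightarrow> ('e::linorder) list \<Rightarrow> 'e lam" where
  "Dsum r f ws = (\<lambda>U. \<Sum>i<length ws. f i * listprod r (remove_nth i ws) U)"

lemma Dsum_Nil[simp]: "Dsum r f [] = lzero" by (simp add: Dsum_def lzero_def)

lemma Dsum_Cons: "Dsum r f (a # ws) = ladd (lscale (f 0) (listprod r ws)) (lmult r (gen a) (Dsum r (\<lambda>i. f (Suc i)) ws))"
proof -
  have "lmult r (gen a) (Dsum r (\<lambda>i. f (Suc i)) ws) = (\<lambda>U. \<Sum>i<length ws. f (Suc i) * lmult r (gen a) (listprod r (remove_nth i ws)) U)"
    unfolding Dsum_def by (rule lmult_sum_right) simp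
  then show ?thesis
    unfolding Dsum_def ladd_def lscale_def
    by (simp only: length_Cons sum.lessThan_Suc_shift) simp
qed

lemma fin_Dsum[simp]: "fin (Dsum r f ws)"
  unfolding fin_def Dsum_def
  by (metis (no_types, lifting) fin_inf fin_listprod mult_zero_right sum.neutral)

lemma Dsum_cong: "(\<And>i. i < length ws \<Longrightarrow> f i = g i) \<Longrightarrow> Dsum r f ws = Dsum r g ws"
  unfolding Dsum_def by (intro ext sum.cong) auto

lemma Dsum_scale: "Dsum r (\<lambda>i. c * f i) ws = lscale c (Dsum r f ws)"
  unfolding Dsum_def lscale_def by (simp add: sum_distrib_left mult.assoc)

lemma hom_Dsum: "hom (length ws - 1) (Dsum r f ws)"
proof (unfold hom_def, intro allI impI)
  fix U assume "Dsum r f ws U \<noteq> 0"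
  then obtain i where "i < length ws" "listprod r (remove_nth i ws) U \<noteq> 0"
    unfolding Dsum_def by (metis (no_types, lifting) lessThan_iff mult_zero_right sum.neutral)
  then show "card U = length ws - 1"
    using hom_listprod[of "remove_nth i ws" r] length_remove_nth by (auto simp: hom_def)
qed

lemma in_lam_Dsum: "set ws \<subseteq> E \<Longrightarrow> in_lam E (Dsum r f ws)"
proof (unfold in_lam_def, intro allI impI)
  fix U assume s: "set ws \<subseteq> E" and "Dsum r f ws U \<noteq> 0"
  then obtain i where "i < length ws" "listprod r (remove_nth i ws) U \<noteq> 0"
    unfolding Dsum_def by (metis (no_types, lifting) lessThan_iff mult_zero_right sum.neutral)
  then show "U \<subseteq> E"
    using in_lam_listprod[of "remove_nth i ws" E r] set_remove_nth[of i ws] s by (auto simp: in_lam_def)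
qed

lemma Dsum_append:
  "Dsum r f (as @ bs) = ladd (lmult r (Dsum r f as) (listprod r bs)) (lmult r (listprod r as) (Dsum r (\<lambda>i. f (i + length as)) bs))"
proof (induction as arbitrary: f)
  case Nil
  then show ?case by (simp add: lmult_lone_left) (rule ext, simp add: ladd_def lzero_def)
next
  case (Cons a as)
  have "Dsum r f ((a # as) @ bs) = ladd (lscale (f 0) (listprod r (as @ bs))) (lmult r (gen a) (Dsum r (\<lambda>i. f (Suc i)) (as @ bs)))"
    by (simp add: Dsum_Cons)
  also have "\<dots> = ladd (lmult r (Dsum r f (a # as)) (listprod r bs)) (lmult r (listprod r (a # as)) (Dsum r (\<lambda>i. f (i + length (a # as))) bs))"
    unfolding Cons Dsum_Cons listprod_append
    by (simp add: lmult_ladd_left lmult_ladd_right lmult_lscale_left lmult_assoc) (rule ext, simp add: ladd_def lscale_def)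
  finally show ?case .
qed

definition rho :: "'e \<Rightarrow> 'e lam \<Rightarrow> 'e lam" where "rho a x = (\<lambda>S. if a \<in> S then 0 else x S)"
definition sig :: "nat \<Rightarrow> ('e::linorder) \<Rightarrow> 'e set \<Rightarrow> int" where "sig r a U = sg r (card {u \<in> U. a < u})"
definition gp :: "nat \<Rightarrow> ('e::linorder) \<Rightarrow> 'e lam \<Rightarrow> 'e lam" where
  "gp r a x = (\<lambda>U. if a \<in> U then 0 else sig r a U * x (insert a U))"

lemma sig_union:
  assumes "finite A" "finite B" "A \<inter> B = {}"
  shows "sig r a (A \<union> B) = sig r a A * sig r a B"
proof -
  have "{u \<in> A \<union> B. a < u} = {u \<in> A. a < u} \<union> {u \<in> B. a < u}" by auto
  moreover have "card ({u \<in> A. a < u} \<union> {u \<in> B. a < u}) = card {u \<in> A. a < u} + card {u \<in> B. a < u}"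
    by (rule card_Un_disjoint) (use assms in auto)
  ultimately show ?thesis unfolding sig_def by (simp add: sg_add)
qed

lemma sig_lt:
  assumes "finite T" "a \<notin> T"
  shows "sig r a T * sg r (card {t \<in> T. t < a}) = sg r (card T)"
proof -
  have "T = {u \<in> T. a < u} \<union> {t \<in> T. t < a}" using assms(2) by auto (metis linorder_neqE)
  then have "card T = card ({u \<in> T. a < u} \<union> {t \<in> T. t < a})" by simp
  also have "\<dots> = card {u \<in> T. a < u} + card {t \<in> T. t < a}"
    by (rule card_Un_disjoint) (use assms in auto)
  finally show ?thesis unfolding sig_def by (simp add: sg_add)
qed

lemma sig_sq: "sig r a U * sig r a U = 1" by (simp add: sig_def sg_sq)

lemma rho_lmult: "rho a (lmult r x y) = lmult r (rho a x) (rho a y)"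
proof (rule ext)
  fix U
  show "rho a (lmult r x y) U = lmult r (rho a x) (rho a y) U"
  proof (cases "a \<in> U")
    case True
    then show ?thesis unfolding rho_def lmult_sg
      by (auto intro!: sum.neutral)
  next
    case False
    then show ?thesis unfolding rho_def lmult_sg
      by (auto intro!: sum.cong)
  qed
qed

lemma rho_gen: "rho a (gen e) = (if e = a then lzero else gen e)"
  by (rule ext) (auto simp: rho_def gen_def lzero_def)
lemma rho_lone[simp]: "rho a lone = lone" by (rule ext) (auto simp: rho_def lone_def)
lemma rho_lzero[simp]: "rho a lzero = lzero" by (rule ext) (auto simp: rho_def lzero_def)
lemma rho_ladd: "rho a (ladd x y) = ladd (rho a x) (rho a y)" by (rule ext) (auto simp: rho_def ladd_def)
lemma rho_lsub: "rho a (lsub x y) = lsub (rho a x) (rho a y)" by (rule ext) (auto simp: rho_def lsub_def)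
lemma rho_lscale: "rho a (lscale c x) = lscale c (rho a x)" by (rule ext) (auto simp: rho_def lscale_def)
lemma rho_gradinv: "rho a (gradinv r x) = gradinv r (rho a x)" by (rule ext) (auto simp: rho_def gradinv_sg)
lemma rho_id: "in_lam (E - {a}) x \<Longrightarrow> rho a x = x"
  by (rule ext) (auto simp: rho_def in_lam_def)
lemma in_lam_rho: "in_lam E x \<Longrightarrow> in_lam (E - {a}) (rho a x)"
  by (auto simp: rho_def in_lam_def)
lemma fin_rho[simp]: "fin x \<Longrightarrow> fin (rho a x)" by (auto simp: rho_def fin_def)

lemma gp_ladd: "gp r a (ladd x y) = ladd (gp r a x) (gp r a y)" by (rule ext) (auto simp: gp_def ladd_def algebra_simps)
lemma gp_lsub: "gp r a (lsub x y) = lsub (gp r a x) (gp r a y)" by (rule ext) (auto simp: gp_def lsub_def algebra_simps)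
lemma gp_lscale: "gp r a (lscale c x) = lscale c (gp r a x)" by (rule ext) (auto simp: gp_def lscale_def algebra_simps)
lemma gp_lzero[simp]: "gp r a lzero = lzero" by (rule ext) (auto simp: gp_def lzero_def)
lemma gp_lone[simp]: "gp r a lone = lzero" by (rule ext) (auto simp: gp_def lone_def lzero_def)
lemma gp_gen: "gp r a (gen e) = (if e = a then lone else lzero)"
  by (rule ext) (auto simp: gp_def gen_def lzero_def lone_def sig_def)
lemma gp_zero: "in_lam (E - {a}) x \<Longrightarrow> gp r a x = lzero"
  by (rule ext) (auto simp: gp_def in_lam_def lzero_def)
lemma gp_rho[simp]: "gp r a (rho a x) = lzero"
  by (rule ext) (auto simp: gp_def rho_def lzero_def)
lemma rho_gp[simp]: "rho a (gp r a x) = gp r a x"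
  by (rule ext) (auto simp: gp_def rho_def)
lemma in_lam_gp: "in_lam E x \<Longrightarrow> in_lam (E - {a}) (gp r a x)"
  by (auto simp: gp_def in_lam_def)
lemma fin_gp[simp]: "fin x \<Longrightarrow> fin (gp r a x)"
  by (auto simp: gp_def fin_def)

lemma Pow_insert_disj: "a \<notin> U \<Longrightarrow> Pow U \<inter> insert a ` Pow U = {}" by auto

lemma gp_leibniz:
  "gp r a (lmult r x y) = ladd (lmult r (rho a x) (gp r a y)) (lmult r (gp r a x) (gradinv r (rho a y)))"
proof (rule ext)
  fix U
  show "gp r a (lmult r x y) U = ladd (lmult r (rho a x) (gp r a y)) (lmult r (gp r a x) (gradinv r (rho a y))) U"
  proof (cases "a \<in> U")
    case True
    then show ?thesis unfolding gp_def ladd_def lmult_sg rho_def gradinv_sg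
      apply simp
      apply (subst sum.neutral, force)
      apply (subst sum.neutral, force)
      by simp
  next
    case aU: False
    show ?thesis
    proof (cases "finite U")
      case False then show ?thesis by (simp add: gp_def ladd_def lmult_infinite)
    next
      case fU: True
      let ?U' = "insert a U"
      have "lmult r x y ?U' = (\<Sum>S\<in>Pow U. x S * y (?U' - S) * sg r (inv_count S (?U' - S)))
         + (\<Sum>S\<in>insert a ` Pow U. x S * y (?U' - S) * sg r (inv_count S (?U' - S)))"
        unfolding lmult_sg Pow_insert by (rule sum.union_disjoint) (auto simp: fU aU)
      also have "(\<Sum>S\<in>insert a ` Pow U. x S * y (?U' - S) * sg r (inv_count S (?U' - S)))
          = (\<Sum>S\<in>Pow U. x (insert a S) * y (U - S) * sg r (inv_count (insert a S) (U - S)))"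
      proof (subst sum.reindex)
        show "inj_on (insert a) (Pow U)" using aU unfolding inj_on_def
          by (metis Diff_insert_absorb PowD subsetD)
        show "sum ((\<lambda>S. x S * y (?U' - S) * sg r (inv_count S (?U' - S))) \<circ> insert a) (Pow U) =
          (\<Sum>S\<in>Pow U. x (insert a S) * y (U - S) * sg r (inv_count (insert a S) (U - S)))"
        proof (rule sum.cong[OF refl])
          fix S assume "S \<in> Pow U"
          then have "?U' - insert a S = U - S" using aU by auto
          then show "((\<lambda>S. x S * y (?U' - S) * sg r (inv_count S (?U' - S))) \<circ> insert a) S =
              x (insert a S) * y (U - S) * sg r (inv_count (insert a S) (U - S))" by simp
        qed
      qed
      finally have split: "lmult r x y ?U' = (\<Sum>S\<in>Pow U. x S * y (?U' - S) * sg r (inv_count S (?U' - S)))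
         + (\<Sum>S\<in>Pow U. x (insert a S) * y (U - S) * sg r (inv_count (insert a S) (U - S)))" .
      have p1: "sig r a U * (\<Sum>S\<in>Pow U. x S * y (?U' - S) * sg r (inv_count S (?U' - S)))
          = lmult r (rho a x) (gp r a y) U"
        unfolding lmult_sg sum_distrib_left
      proof (rule sum.cong[OF refl])
        fix S assume S: "S \<in> Pow U"
        have fS: "finite S" "finite (U - S)" using S fU by (auto intro: finite_subset)
        have aS: "a \<notin> S" "a \<notin> U - S" using S aU by auto
        have e1: "?U' - S = insert a (U - S)" using aS by auto
        have "inv_count S (insert a (U - S)) = inv_count S {a} + inv_count S (U - S)"
          using inv_count_union_right[of S "{a}" "U - S"] fS aS by auto
        then have i1: "sg r (inv_count S (insert a (U - S))) = sig r a S * sg r (inv_count S (U - S))"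
          by (simp add: sg_add inv_count_single_right sig_def)
        have "U = S \<union> (U - S)" using S by auto
        then have s1: "sig r a U = sig r a S * sig r a (U - S)"
          using sig_union[of S "U - S" r a] fS by auto
        have "sig r a U * (x S * y (?U' - S) * sg r (inv_count S (?U' - S)))
            = (sig r a S * sig r a S) * (sig r a (U - S) * x S * y (insert a (U - S)) * sg r (inv_count S (U - S)))"
          unfolding e1 i1 s1 by (simp add: algebra_simps)
        also have "\<dots> = rho a x S * gp r a y (U - S) * sg r (inv_count S (U - S))"
          using aS by (simp add: sig_sq rho_def gp_def)
        finally show "sig r a U * (x S * y (?U' - S) * sg r (inv_count S (?U' - S))) =
            rho a x S * gp r a y (U - S) * sg r (inv_count S (U - S))" .
      qed
      have p2: "sig r a U * (\<Sum>S\<in>Pow U. x (insert a S) * y (U - S) * sg r (inv_count (insert a S) (U - S)))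
          = lmult r (gp r a x) (gradinv r (rho a y)) U"
        unfolding lmult_sg sum_distrib_left
      proof (rule sum.cong[OF refl])
        fix S assume S: "S \<in> Pow U"
        have fS: "finite S" "finite (U - S)" using S fU by (auto intro: finite_subset)
        have aS: "a \<notin> S" "a \<notin> U - S" using S aU by auto
        have "inv_count (insert a S) (U - S) = inv_count {a} (U - S) + inv_count S (U - S)"
          using inv_count_union_left[of "{a}" S "U - S"] fS aS by auto
        then have i1: "sg r (inv_count (insert a S) (U - S)) = sg r (card {t \<in> U - S. t < a}) * sg r (inv_count S (U - S))"
          by (simp add: sg_add inv_count_single_left)
        have "U = S \<union> (U - S)" using S by auto
        then have s1: "sig r a U = sig r a S * sig r a (U - S)"
          using sig_union[of S "U - S" r a] fS by auto
        have s2: "sig r a (U - S) * sg r (card {t \<in> U - S. t < a}) = sg r (card (U - S))"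
          using sig_lt[of "U - S" a r] fS aS by auto
        have "sig r a U * (x (insert a S) * y (U - S) * sg r (inv_count (insert a S) (U - S)))
            = sig r a S * x (insert a S) * (sig r a (U - S) * sg r (card {t \<in> U - S. t < a})) * y (U - S) * sg r (inv_count S (U - S))"
          unfolding i1 s1 by (simp add: algebra_simps)
        also have "\<dots> = gp r a x S * gradinv r (rho a y) (U - S) * sg r (inv_count S (U - S))"
          unfolding s2 using aS by (simp add: gp_def gradinv_sg rho_def)
        finally show "sig r a U * (x (insert a S) * y (U - S) * sg r (inv_count (insert a S) (U - S))) =
            gp r a x S * gradinv r (rho a y) (U - S) * sg r (inv_count S (U - S))" .
      qed
      show ?thesis
        using aU split p1 p2 by (simp add: gp_def ladd_def distrib_left)
    qed
  qed
qed

lemma ext_rho_gp: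
  assumes "rho a x = rho a y" "gp r a x = gp r a y"
  shows "x = y"
proof (rule ext)
  fix U
  show "x U = y U"
  proof (cases "a \<in> U")
    case False then show ?thesis using fun_cong[OF assms(1), of U] by (simp add: rho_def)
  next
    case True
    have "gp r a x (U - {a}) = gp r a y (U - {a})" using assms(2) by simp
    then have "sig r a (U - {a}) * x U = sig r a (U - {a}) * y U"
      using True by (simp add: gp_def insert_absorb)
    then show ?thesis using sig_sq[of r a "U - {a}"]
      by (metis mult_cancel_left mult_zero_left one_neq_zero)
  qed
qed

lemma gp_mult_gen: "fin y \<Longrightarrow> gp r a (lmult r y (gen a)) = rho a y"
  by (simp add: gp_leibniz gp_gen rho_gen lmult_lone_right) (rule ext, simp add: ladd_def lzero_def)

lemma decomp: assumes "fin x" shows "x = ladd (rho a x) (lmult r (gp r a x) (gen a))"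
proof (rule ext_rho_gp[where a = a and r = r])
  show "rho a x = rho a (ladd (rho a x) (lmult r (gp r a x) (gen a)))"
    by (simp add: rho_ladd rho_lmult rho_gen) (rule ext, simp add: ladd_def rho_def lzero_def)
  show "gp r a x = gp r a (ladd (rho a x) (lmult r (gp r a x) (gen a)))"
    using assms by (simp add: gp_ladd gp_mult_gen) (rule ext, simp add: ladd_def lzero_def)
qed

lemma tlistprod_eq: "tlistprod r a ws = (rho a (listprod r ws), gp r a (listprod r ws))"
proof (induction ws)
  case Nil then show ?case by (simp add: tlistprod_def)
next
  case (Cons e ws)
  have "tlistprod r a (e # ws) = tmult r (psi_gen a e) (tlistprod r a ws)" by (simp add: tlistprod_def)
  also have "psi_gen a e = (rho a (gen e), gp r a (gen e))"
    by (simp add: psi_gen_def rho_gen gp_gen)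
  finally show ?case using Cons by (simp add: tmult_def rho_lmult gp_leibniz)
qed

lemma g_map_eq:
  assumes "finite E" "in_lam E x"
  shows "g_map r E a x = gp r a x"
proof (rule ext)
  fix U
  have "g_map r E a x U = (\<Sum>S\<in>Pow E. x S * gp r a (bas S) U)"
    unfolding g_map_def tlistprod_eq snd_conv
  proof (rule sum.cong[OF refl])
    fix S assume "S \<in> Pow E"
    then have "finite S" using assms(1) by (auto intro: finite_subset)
    then show "x S * gp r a (listprod r (sorted_list_of_set S)) U = x S * gp r a (bas S) U"
      by (simp add: listprod_sorted strict_sorted_list_of_set)
  qed
  also have "\<dots> = (if a \<in> U then 0 else sig r a U * (\<Sum>S\<in>Pow E. if S = insert a U then x S else 0))"
    by (auto simp: gp_def bas_def sum_distrib_left intro!: sum.cong)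
  also have "\<dots> = gp r a x U"
    using assms(1,2) by (auto simp: gp_def in_lam_def)
  finally show "g_map r E a x U = gp r a x U" .
qed

definition chain :: "('e \<Rightarrow> 'v) \<Rightarrow> ('e \<Rightarrow> 'v) \<Rightarrow> 'e list \<Rightarrow> 'v list \<Rightarrow> bool" where
  "chain src tgt ws vsc \<longleftrightarrow> length vsc = Suc (length ws) \<and>
     (\<forall>i<length ws. {src (ws ! i), tgt (ws ! i)} = {vsc ! i, vsc ! Suc i})"

definition ccirc :: "'e set \<Rightarrow> ('e \<Rightarrow> 'v) \<Rightarrow> ('e \<Rightarrow> 'v) \<Rightarrow> 'e list \<Rightarrow> 'v list \<Rightarrow> bool" where
  "ccirc E src tgt ws vsc \<longleftrightarrow> ws \<noteq> [] \<and> set ws \<subseteq> E \<and> chain src tgt ws vsc \<and> vsc ! 0 = vsc ! length ws"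

definition oc :: "('e \<Rightarrow> 'v) \<Rightarrow> ('e \<Rightarrow> 'v) \<Rightarrow> 'e list \<Rightarrow> 'v list \<Rightarrow> nat \<Rightarrow> int" where
  "oc src tgt ws vsc i = (if src (ws ! i) = vsc ! i \<and> tgt (ws ! i) = vsc ! Suc i then 1 else -1)"

definition coef :: "nat \<Rightarrow> ('e \<Rightarrow> 'v) \<Rightarrow> ('e \<Rightarrow> 'v) \<Rightarrow> 'e list \<Rightarrow> 'v list \<Rightarrow> nat \<Rightarrow> int" where
  "coef r src tgt ws vsc i = (if even r then (-1) ^ (i + 1) else oc src tgt ws vsc i)"

definition Arn :: "nat \<Rightarrow> ('e \<Rightarrow> 'v) \<Rightarrow> ('e \<Rightarrow> 'v) \<Rightarrow> ('e::linorder) list \<Rightarrow> 'v list \<Rightarrow> 'e lam" where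
  "Arn r src tgt ws vsc = Dsum r (coef r src tgt ws vsc) ws"

lemma circuit_to_ccirc:
  assumes "circuit E src tgt ws vs"
  shows "ccirc E src tgt ws (vs @ [vs ! 0])"
    and "length ws \<ge> 2 \<Longrightarrow> arnold r src tgt ws vs = Arn r src tgt ws (vs @ [vs ! 0])"
proof -
  have k: "length ws \<ge> 1" "length vs = length ws" "set ws \<subseteq> E"
    and ch: "\<forall>i < length ws. {src (ws ! i), tgt (ws ! i)} = {vs ! i, vs ! ((i + 1) mod length ws)}"
    using assms by (auto simp: circuit_def)
  have nx: "(vs @ [vs ! 0]) ! Suc i = vs ! ((i + 1) mod length ws)" if "i < length ws" for i
  proof (cases "Suc i < length ws")
    case True then show ?thesis using k by (simp add: nth_append)
  next
    case False then have "Suc i = length ws" using that by simp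
    then show ?thesis using k by (simp add: nth_append)
  qed
  have cu: "(vs @ [vs ! 0]) ! i = vs ! i" if "i < length ws" for i using that k by (simp add: nth_append)
  show "ccirc E src tgt ws (vs @ [vs ! 0])"
    unfolding ccirc_def chain_def using k ch nx cu by (auto simp: nth_append)
  assume "length ws \<ge> 2"
  then have "length ws \<noteq> 1" by simp
  then show "arnold r src tgt ws vs = Arn r src tgt ws (vs @ [vs ! 0])"
    unfolding arnold_def Arn_def Dsum_def coef_def oc_def eps_def
  proof (simp, intro ext sum.cong refl)
    fix U i assume "i \<in> {..<length ws}"
    then show "(if even r then (- 1) ^ (i + 1) else if src (ws ! i) = vs ! i \<and> tgt (ws ! i) = vs ! ((i + 1) mod length ws) then 1 else - 1) *
         listprod r (remove_nth i ws) U =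
         (if even r then (- 1) ^ (i + 1) else if src (ws ! i) = (vs @ [vs ! 0]) ! i \<and> tgt (ws ! i) = (vs @ [vs ! 0]) ! Suc i then 1 else - 1) *
         listprod r (remove_nth i ws) U"
      using nx[of i] cu[of i] by simp
  qed
qed

lemma ccirc_to_circuit:
  assumes "ccirc E src tgt ws vsc"
  shows "circuit E src tgt ws (butlast vsc)"
    and "butlast vsc @ [butlast vsc ! 0] = vsc"
proof -
  have k: "ws \<noteq> []" "set ws \<subseteq> E" "length vsc = Suc (length ws)" "vsc ! 0 = vsc ! length ws"
    and ch: "\<forall>i<length ws. {src (ws ! i), tgt (ws ! i)} = {vsc ! i, vsc ! Suc i}"
    using assms by (auto simp: ccirc_def chain_def)
  have bl: "butlast vsc ! i = vsc ! i" if "i < length ws" for i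
    using that k by (simp add: nth_butlast)
  have "butlast vsc @ [last vsc] = vsc" using k by (metis append_butlast_last_id list.size(3) nat.distinct(1))
  moreover have "last vsc = butlast vsc ! 0" using k bl
    by (metis diff_Suc_1 last_conv_nth length_greater_0_conv list.size(3) nat.distinct(1))
  ultimately show "butlast vsc @ [butlast vsc ! 0] = vsc" by simp
  have nx: "butlast vsc ! ((i + 1) mod length ws) = vsc ! Suc i" if "i < length ws" for i
  proof (cases "Suc i < length ws")
    case True then show ?thesis using bl by simp
  next
    case False then have "Suc i = length ws" using that by simp
    then show ?thesis using bl k by simp
  qed
  show "circuit E src tgt ws (butlast vsc)"
    unfolding circuit_def using k ch bl nx by (auto simp: Suc_le_eq)
qed

lemma ccirc_arnold:
  assumes "ccirc E src tgt ws vsc" "length ws \<ge> 2"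
  shows "arnold r src tgt ws (butlast vsc) = Arn r src tgt ws vsc"
  using circuit_to_ccirc(2)[OF ccirc_to_circuit(1)[OF assms(1)] assms(2)] ccirc_to_circuit(2)[OF assms(1)]
  by simp

lemma ccirc_len2:
  assumes "ccirc E src tgt ws vsc" "\<forall>e\<in>E. src e \<noteq> tgt e"
  shows "length ws \<ge> 2"
proof (rule ccontr)
  assume "\<not> length ws \<ge> 2"
  moreover have "ws \<noteq> []" using assms by (simp add: ccirc_def)
  ultimately have l: "length ws = 1"
    using length_greater_0_conv[of ws] by linarith
  then have "{src (ws ! 0), tgt (ws ! 0)} = {vsc ! 0, vsc ! 1}" "vsc ! 0 = vsc ! 1" "ws ! 0 \<in> E"
    using assms(1) by (auto simp: ccirc_def chain_def)
  then show False using assms(2) by (metis doubleton_eq_iff)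
qed

lemma ccirc_in_ideal:
  assumes "ccirc E src tgt ws vsc" "\<forall>e\<in>E. src e \<noteq> tgt e"
  shows "Arn r src tgt ws vsc \<in> arnold_ideal r E src tgt"
  using arnold_ideal.gen[OF ccirc_to_circuit(1)[OF assms(1)]] ccirc_arnold[OF assms(1) ccirc_len2[OF assms]]
  by simp

lemma arnold_Dsum: "length ws \<noteq> 1 \<Longrightarrow>
  arnold r src tgt ws vs = Dsum r (\<lambda>i. if even r then (-1) ^ (i + 1) else eps src tgt ws vs i) ws"
  unfolding arnold_def Dsum_def by simp

lemma fin_arnold[simp]: "fin (arnold r src tgt ws vs)"
  by (cases "length ws = 1") (auto simp: arnold_Dsum, simp add: arnold_def)

lemma ideal_in_lam: "x \<in> arnold_ideal r E src tgt \<Longrightarrow> in_lam E x"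
proof (induction rule: arnold_ideal.induct)
  case (gen ws vs)
  then have s: "set ws \<subseteq> E" by (simp add: circuit_def)
  show ?case
  proof (cases "length ws = 1")
    case True then show ?thesis by (simp add: arnold_def)
  next
    case False
    have "arnold r src tgt ws vs = Dsum r (\<lambda>i. if even r then (-1) ^ (i + 1) else eps src tgt ws vs i) ws"
      using False unfolding arnold_def Dsum_def by simp
    then show ?thesis using in_lam_Dsum[OF s] by simp
  qed
qed auto

lemma ideal_lscale: "x \<in> arnold_ideal r E src tgt \<Longrightarrow> lscale c x \<in> arnold_ideal r E src tgt"
proof -
  assume x: "x \<in> arnold_ideal r E src tgt"
  have "lmult r (lscale c lone) x \<in> arnold_ideal r E src tgt"
    by (rule arnold_ideal.lmul[OF x]) simp
  moreover have "fin x" using x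
    by (induction rule: arnold_ideal.induct) auto
  ultimately show ?thesis by (simp add: lmult_lscale_left lmult_lone_left)
qed

lemma ideal_fin: "x \<in> arnold_ideal r E src tgt \<Longrightarrow> fin x"
  by (induction rule: arnold_ideal.induct) auto

lemma ideal_lsub: "x \<in> arnold_ideal r E src tgt \<Longrightarrow> y \<in> arnold_ideal r E src tgt \<Longrightarrow> lsub x y \<in> arnold_ideal r E src tgt"
proof -
  assume x: "x \<in> arnold_ideal r E src tgt" and y: "y \<in> arnold_ideal r E src tgt"
  have "ladd x (lscale (-1) y) \<in> arnold_ideal r E src tgt"
    by (rule arnold_ideal.add[OF x ideal_lscale[OF y]])
  moreover have "ladd x (lscale (-1) y) = lsub x y" by (rule ext) (simp add: ladd_def lscale_def lsub_def)
  ultimately show ?thesis by simp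
qed

lemma oc_eq: "ws ! i = ws' ! j \<Longrightarrow> vsc ! i = vsc' ! j \<Longrightarrow> vsc ! Suc i = vsc' ! Suc j \<Longrightarrow>
   oc src tgt ws vsc i = oc src tgt ws' vsc' j"
  by (simp add: oc_def)

lemma sg_odd: "odd r \<Longrightarrow> sg r n = 1"
  by (simp add: sg_def)

lemma sg_even: "even r \<Longrightarrow> r \<ge> 1 \<Longrightarrow> sg r n = (-1) ^ n"
proof -
  assume "even r" "r \<ge> 1"
  then have "odd (r - 1)" by simp
  then show ?thesis by (simp add: sg_def power_mult) 
qed

lemma split_lemma:
  assumes cc: "ccirc E src tgt ws vsc" and pq: "p < q" "q < length ws" and eq: "vsc ! p = vsc ! q"
    and r1: "r \<ge> 1"
  defines "X \<equiv> take p ws" and "M \<equiv> take (q - p) (drop p ws)" and "Y \<equiv> drop q ws"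
    and "vM \<equiv> take (Suc (q - p)) (drop p vsc)" and "vXY \<equiv> take p vsc @ drop q vsc"
  shows "ccirc E src tgt M vM" "ccirc E src tgt (X @ Y) vXY"
    "length M < length ws" "length (X @ Y) < length ws"
    "\<exists>c1 c2. Arn r src tgt ws vsc = ladd (lscale c1 (lmult r (listprod r M) (Arn r src tgt (X @ Y) vXY)))
        (lscale c2 (lmult r (lmult r (listprod r X) (Arn r src tgt M vM)) (listprod r Y)))"
proof -
  define k where "k = length ws"
  have lv: "length vsc = Suc k" and ch: "\<forall>i<k. {src (ws ! i), tgt (ws ! i)} = {vsc ! i, vsc ! Suc i}"
    and sE: "set ws \<subseteq> E" and cl: "vsc ! 0 = vsc ! k"
    using cc by (auto simp: ccirc_def chain_def k_def)
  have ws_eq: "ws = X @ M @ Y"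
    unfolding X_def M_def Y_def using pq
    by (metis append_take_drop_id drop_drop le_add_diff_inverse2 less_imp_le)
  have lX: "length X = p" and lM: "length M = q - p" and lY: "length Y = k - q"
    using pq by (auto simp: X_def M_def Y_def k_def)
  have Mn: "M ! i = ws ! (p + i)" if "i < q - p" for i using that pq by (simp add: M_def)
  have vMn: "vM ! i = vsc ! (p + i)" if "i \<le> q - p" for i using that pq lv k_def by (simp add: vM_def)
  have lvM: "length vM = Suc (q - p)" using pq lv k_def by (simp add: vM_def)
  have XYn: "(X @ Y) ! i = (if i < p then ws ! i else ws ! (q + (i - p)))" if "i < p + (k - q)" for i
    using that pq lX by (auto simp: nth_append X_def Y_def k_def)
  have vXYn: "vXY ! i = (if i < p then vsc ! i else vsc ! (q + (i - p)))" if "i \<le> p + (k - q)" for i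
    using that pq lv by (auto simp: nth_append vXY_def k_def)
  have lvXY: "length vXY = Suc (p + (k - q))" using pq lv k_def by (simp add: vXY_def)
  have lXY: "length (X @ Y) = p + (k - q)" using lX lY by simp
  show cM: "ccirc E src tgt M vM"
    unfolding ccirc_def chain_def
  proof (intro conjI allI impI)
    show "M \<noteq> []" using lM pq by auto
    show "set M \<subseteq> E" using sE ws_eq by auto
    show "length vM = Suc (length M)" using lvM lM by simp
    show "vM ! 0 = vM ! length M" using vMn[of 0] vMn[of "q - p"] lM pq eq by simp
  next
    fix i assume "i < length M"
    then show "{src (M ! i), tgt (M ! i)} = {vM ! i, vM ! Suc i}"
      using ch Mn vMn lM pq k_def by simp
  qed
  show cXY: "ccirc E src tgt (X @ Y) vXY"
    unfolding ccirc_def chain_def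
  proof (intro conjI allI impI)
    show "X @ Y \<noteq> []" using lXY pq k_def by auto
    show "set (X @ Y) \<subseteq> E" using sE ws_eq by auto
    show "length vXY = Suc (length (X @ Y))" using lvXY lXY by simp
    show "vXY ! 0 = vXY ! length (X @ Y)"
      using vXYn[of 0] vXYn[of "p + (k - q)"] lXY pq cl eq k_def by auto
  next
    fix i assume i: "i < length (X @ Y)"
    show "{src ((X @ Y) ! i), tgt ((X @ Y) ! i)} = {vXY ! i, vXY ! Suc i}"
    proof (cases "Suc i < p")
      case True then show ?thesis using XYn[of i] vXYn[of i] vXYn[of "Suc i"] i lXY ch pq k_def by simp
    next
      case False
      show ?thesis
      proof (cases "i < p")
        case True then have "Suc i = p" using False by simp
        then show ?thesis using XYn[of i] vXYn[of i] vXYn[of "Suc i"] i lXY ch pq k_def eq by simp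
      next
        case False
        then have "q + (i - p) < k" "Suc (q + (i - p)) = q + (Suc i - p)" using i lXY pq k_def by auto
        then show ?thesis using XYn[of i] vXYn[of i] vXYn[of "Suc i"] i lXY ch False by simp
      qed
    qed
  qed
  show "length M < length ws" using lM pq by simp
  show "length (X @ Y) < length ws" using lXY pq k_def by simp
  define f where "f = coef r src tgt ws vsc"
  define g where "g = coef r src tgt (X @ Y) vXY"
  define h where "h = coef r src tgt M vM"
  define s :: int where "s = (if even r then (-1) ^ (q - p) else 1)"
  define t :: int where "t = (if even r then (-1) ^ p else 1)"
  define PX where "PX = listprod r X"
  define PM where "PM = listprod r M"
  define PY where "PY = listprod r Y"
  define DX where "DX = Dsum r f X"
  define DY where "DY = Dsum r (\<lambda>i. g (i + p)) Y"
  define AM where "AM = Arn r src tgt M vM"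
  have fg: "Dsum r g X = DX" unfolding DX_def
  proof (rule Dsum_cong)
    fix i assume "i < length X"
    then have i: "i < p" using lX by simp
    show "g i = f i"
    proof (cases "even r")
      case True then show ?thesis by (simp add: f_def g_def coef_def)
    next
      case False
      have "oc src tgt (X @ Y) vXY i = oc src tgt ws vsc i"
      proof (rule oc_eq)
        show "(X @ Y) ! i = ws ! i" using XYn[of i] i pq k_def by simp
        show "vXY ! i = vsc ! i" using vXYn[of i] i by simp
        show "vXY ! Suc i = vsc ! Suc i"
        proof (cases "Suc i < p")
          case True then show ?thesis using vXYn[of "Suc i"] by simp
        next
          case False then have "Suc i = p" using i by simp
          then show ?thesis using vXYn[of "Suc i"] eq pq k_def by simp
        qed
      qed
      then show ?thesis using False by (simp add: f_def g_def coef_def)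
    qed
  qed
  have fY: "Dsum r (\<lambda>i. f (i + (q - p) + p)) Y = lscale s DY" unfolding DY_def Dsum_scale[symmetric]
  proof (rule Dsum_cong)
    fix i assume "i < length Y"
    then have i: "q + i < k" using lY pq by simp
    have qi: "i + (q - p) + p = q + i" using pq by simp
    show "f (i + (q - p) + p) = s * g (i + p)"
    proof (cases "even r")
      case True
      have "(-1::int) ^ (q + i + 1) = (-1) ^ (q - p) * (-1) ^ (i + p + 1)"
        using pq by (simp add: power_add[symmetric])
      then show ?thesis using True by (simp add: f_def g_def coef_def s_def qi)
    next
      case False
      have "oc src tgt ws vsc (q + i) = oc src tgt (X @ Y) vXY (i + p)"
      proof (rule oc_eq)
        show "ws ! (q + i) = (X @ Y) ! (i + p)" using XYn[of "i + p"] i by simp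
        show "vsc ! (q + i) = vXY ! (i + p)" using vXYn[of "i + p"] i by simp
        show "vsc ! Suc (q + i) = vXY ! Suc (i + p)" using vXYn[of "Suc (i + p)"] i by simp
      qed
      then show ?thesis using False by (simp add: f_def g_def coef_def s_def qi)
    qed
  qed
  have fM: "Dsum r (\<lambda>i. f (i + p)) M = lscale t AM" unfolding AM_def Arn_def Dsum_scale[symmetric]
  proof (rule Dsum_cong)
    fix i assume "i < length M"
    then have i: "i < q - p" using lM by simp
    show "f (i + p) = t * coef r src tgt M vM i"
    proof (cases "even r")
      case True
      have "(-1::int) ^ (i + p + 1) = (-1) ^ p * (-1) ^ (i + 1)"
        by (simp add: power_add[symmetric] add.commute)
      then show ?thesis using True by (simp add: f_def coef_def t_def)
    next
      case False
      have "oc src tgt ws vsc (i + p) = oc src tgt M vM i"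
      proof (rule oc_eq)
        show "ws ! (i + p) = M ! i" using Mn[of i] i by (simp add: add.commute)
        show "vsc ! (i + p) = vM ! i" using vMn[of i] i by (simp add: add.commute)
        show "vsc ! Suc (i + p) = vM ! Suc i" using vMn[of "Suc i"] i by (simp add: add.commute)
      qed
      then show ?thesis using False by (simp add: f_def coef_def t_def)
    qed
  qed
  have A: "Arn r src tgt ws vsc = ladd (lmult r DX (lmult r PM PY))
      (lmult r PX (ladd (lmult r (lscale t AM) PY) (lmult r PM (lscale s DY))))"
  proof -
    have "Arn r src tgt ws vsc = Dsum r f (X @ (M @ Y))" unfolding Arn_def f_def using ws_eq by simp
    also have "\<dots> = ladd (lmult r DX (lmult r PM PY)) (lmult r PX (Dsum r (\<lambda>i. f (i + p)) (M @ Y)))"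
      by (simp add: Dsum_append listprod_append DX_def PX_def PM_def PY_def lX)
    also have "Dsum r (\<lambda>i. f (i + p)) (M @ Y) = ladd (lmult r (lscale t AM) PY) (lmult r PM (lscale s DY))"
      unfolding Dsum_append fM[symmetric] fY[symmetric] PM_def PY_def lM by (simp add: add.assoc)
    finally show ?thesis .
  qed
  have AXY: "Arn r src tgt (X @ Y) vXY = ladd (lmult r DX PY) (lmult r PX DY)"
    unfolding Arn_def g_def[symmetric] Dsum_append fg DY_def PX_def PY_def lX by simp
  have hDX: "hom (p - 1) DX" using hom_Dsum[of X r f] lX by (simp add: DX_def)
  have hPM: "hom (q - p) PM" using hom_listprod[of M r] lM by (simp add: PM_def)
  have hPX: "hom p PX" using hom_listprod[of X r] lX by (simp add: PX_def)
  define s' where "s' = s * sg r (p * (q - p))"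
  have C1: "lmult r DX (lmult r PM PY) = lscale s' (lmult r PM (lmult r DX PY))"
  proof (cases "p = 0")
    case True
    then have "DX = lzero" using lX by (simp add: DX_def)
    then show ?thesis by simp (simp add: lscale_def lzero_def)
  next
    case False
    have "lmult r DX (lmult r PM PY) = lmult r (lmult r DX PM) PY" by (simp add: lmult_assoc)
    also have "lmult r DX PM = lscale (sg r ((p - 1) * (q - p))) (lmult r PM DX)"
      by (rule lmult_comm_hom[OF hDX hPM])
    also have "sg r ((p - 1) * (q - p)) = s'"
    proof (cases "even r")
      case True
      have "(-1::int) ^ ((p - 1) * (q - p)) = (-1) ^ (q - p) * (-1) ^ (p * (q - p))"
      proof -
        have "\<forall>d. p * d + d = (p - 1) * d + 2 * d" using False
          by (cases p) auto
        then have "p * (q - p) + (q - p) = (p - 1) * (q - p) + 2 * (q - p)" by blast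
        then have "(-1::int) ^ (p * (q - p) + (q - p)) = (-1) ^ ((p - 1) * (q - p))"
          by (simp add: power_add power_mult)
        then show ?thesis by (simp add: power_add mult.commute)
      qed
      then show ?thesis using True r1 by (simp add: s'_def s_def sg_even)
    next
      case False then show ?thesis by (simp add: s'_def s_def sg_odd)
    qed
    finally show ?thesis by (simp add: lmult_lscale_left lmult_assoc)
  qed
  have C2: "lmult r PX (lmult r PM DY) = lscale (sg r (p * (q - p))) (lmult r PM (lmult r PX DY))"
  proof -
    have "lmult r PX (lmult r PM DY) = lmult r (lmult r PX PM) DY" by (simp add: lmult_assoc)
    also have "lmult r PX PM = lscale (sg r (p * (q - p))) (lmult r PM PX)"
      by (rule lmult_comm_hom[OF hPX hPM])
    finally show ?thesis by (simp add: lmult_lscale_left lmult_assoc)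
  qed
  have "Arn r src tgt ws vsc = ladd (lscale s' (lmult r PM (Arn r src tgt (X @ Y) vXY)))
        (lscale t (lmult r (lmult r PX AM) PY))"
    unfolding A AXY
    by (simp add: lmult_ladd_left lmult_ladd_right lmult_lscale_left lmult_lscale_right lmult_assoc C1 C2)
      (rule ext, simp add: ladd_def lscale_def s'_def algebra_simps)
  then show "\<exists>c1 c2. Arn r src tgt ws vsc = ladd (lscale c1 (lmult r (listprod r M) (Arn r src tgt (X @ Y) vXY)))
        (lscale c2 (lmult r (lmult r (listprod r X) (Arn r src tgt M vM)) (listprod r Y)))"
    unfolding PM_def PX_def PY_def AM_def by blast
qed

lemma nondistinct_pair:
  assumes "\<not> distinct (take k xs)" "k \<le> length xs"
  shows "\<exists>p q. p < q \<and> q < k \<and> xs ! p = xs ! q"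
proof -
  obtain i j where ij: "i < length (take k xs)" "j < length (take k xs)" "i \<noteq> j" "take k xs ! i = take k xs ! j"
    using assms(1) distinct_conv_nth by blast
  then have "i < k" "j < k" using assms(2) by auto
  then show ?thesis using ij
    by (cases "i < j") (auto, metis linorder_neqE_nat)
qed

lemma arn_induct:
  assumes add: "\<And>x y. x \<in> T \<Longrightarrow> y \<in> T \<Longrightarrow> ladd x y \<in> T"
    and scl: "\<And>c x. x \<in> T \<Longrightarrow> lscale c x \<in> T"
    and lm: "\<And>x y. x \<in> T \<Longrightarrow> in_lam E y \<Longrightarrow> lmult r y x \<in> T"
    and rm: "\<And>x y. x \<in> T \<Longrightarrow> in_lam E y \<Longrightarrow> lmult r x y \<in> T"
    and base: "\<And>ws vsc. ccirc E src tgt ws vsc \<Longrightarrow> distinct (take (length ws) vsc) \<Longrightarrow> Arn r src tgt ws vsc \<in> T"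
    and r1: "r \<ge> 1"
  shows "ccirc E src tgt ws vsc \<Longrightarrow> Arn r src tgt ws vsc \<in> T"
proof (induction "length ws" arbitrary: ws vsc rule: less_induct)
  case less
  show ?case
  proof (cases "distinct (take (length ws) vsc)")
    case True then show ?thesis using base less.prems by blast
  next
    case False
    have lv: "length vsc = Suc (length ws)" and sE: "set ws \<subseteq> E"
      using less.prems by (auto simp: ccirc_def chain_def)
    obtain p q where pq: "p < q" "q < length ws" "vsc ! p = vsc ! q"
      using nondistinct_pair[OF False] lv by auto
    note sp = split_lemma[OF less.prems pq r1]
    let ?X = "take p ws" and ?M = "take (q - p) (drop p ws)" and ?Y = "drop q ws"
    have IH1: "Arn r src tgt ?M (take (Suc (q - p)) (drop p vsc)) \<in> T"
      using less.hyps[OF sp(3) sp(1)] .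
    have IH2: "Arn r src tgt (?X @ ?Y) (take p vsc @ drop q vsc) \<in> T"
      using less.hyps[OF sp(4) sp(2)] .
    have iX: "in_lam E (listprod r ?X)" and iM: "in_lam E (listprod r ?M)" and iY: "in_lam E (listprod r ?Y)"
      using sE by (auto intro!: in_lam_listprod dest: in_set_takeD in_set_dropD)
    obtain c1 c2 where eq: "Arn r src tgt ws vsc = ladd (lscale c1 (lmult r (listprod r ?M) (Arn r src tgt (?X @ ?Y) (take p vsc @ drop q vsc))))
        (lscale c2 (lmult r (lmult r (listprod r ?X) (Arn r src tgt ?M (take (Suc (q - p)) (drop p vsc)))) (listprod r ?Y)))"
      using sp(5) by blast
    show ?thesis unfolding eq
      by (intro add scl lm rm IH1 IH2 iX iM iY)
  qed
qed

lemma cv_simps: "contr_vert src tgt a v = (if v = tgt a then src a else v)"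
  by (simp add: contr_vert_def)

lemma cv_neq_tgt: "src a \<noteq> tgt a \<Longrightarrow> contr_vert src tgt a v \<noteq> tgt a"
  by (simp add: contr_vert_def)

lemma cv_inj: "contr_vert src tgt a x = contr_vert src tgt a y \<Longrightarrow> x \<noteq> y \<Longrightarrow>
   {x, y} = {src a, tgt a} \<and> contr_vert src tgt a x = src a"
  by (auto simp: contr_vert_def split: if_splits)

lemma oc_contr:
  assumes "cv s \<noteq> cv t" "{s, t} = {v, w}"
  shows "(s = v \<and> t = w) \<longleftrightarrow> (cv s = cv v \<and> cv t = cv w)"
  using assms by (metis doubleton_eq_iff)

lemma remove_nth_nth:
  assumes "n < length xs" "i < length xs - 1"
  shows "remove_nth n xs ! i = (if i < n then xs ! i else xs ! Suc i)"
  using assms by (auto simp: remove_nth_def nth_append min_def)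

lemma length_remove_nth': "n < length xs \<Longrightarrow> length (remove_nth n xs) = length xs - 1"
  by (simp add: remove_nth_def)

lemma rho_free: "\<alpha> \<notin> set ws \<Longrightarrow> rho \<alpha> (listprod r ws) = listprod r ws"
  by (rule rho_id[where E = UNIV]) (rule in_lam_listprod, auto)
lemma gp_free: "\<alpha> \<notin> set ws \<Longrightarrow> gp r \<alpha> (listprod r ws) = lzero"
  by (rule gp_zero[where E = UNIV]) (rule in_lam_listprod, auto)
lemma rho_free_D: "\<alpha> \<notin> set ws \<Longrightarrow> rho \<alpha> (Dsum r f ws) = Dsum r f ws"
  by (rule rho_id[where E = UNIV]) (rule in_lam_Dsum, auto)
lemma gp_free_D: "\<alpha> \<notin> set ws \<Longrightarrow> gp r \<alpha> (Dsum r f ws) = lzero"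
  by (rule gp_zero[where E = UNIV]) (rule in_lam_Dsum, auto)

lemma NA_lemma:
  assumes cc: "ccirc E src tgt ws vsc" and an: "\<alpha> \<notin> set ws"
    and NP: "\<forall>e\<in>E - {\<alpha>}. contr_vert src tgt \<alpha> (src e) \<noteq> contr_vert src tgt \<alpha> (tgt e)"
  defines "cv \<equiv> contr_vert src tgt \<alpha>"
  shows "ccirc (E - {\<alpha>}) (cv \<circ> src) (cv \<circ> tgt) ws (map cv vsc)"
    "Arn r (cv \<circ> src) (cv \<circ> tgt) ws (map cv vsc) = Arn r src tgt ws vsc"
proof -
  have lv: "length vsc = Suc (length ws)" and ch: "\<forall>i<length ws. {src (ws ! i), tgt (ws ! i)} = {vsc ! i, vsc ! Suc i}"
    and sE: "set ws \<subseteq> E" and cl: "vsc ! 0 = vsc ! length ws" and ne: "ws \<noteq> []"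
    using cc by (auto simp: ccirc_def chain_def)
  have e: "ws ! i \<in> E - {\<alpha>}" if "i < length ws" for i using that sE an nth_mem by fastforce
  show "ccirc (E - {\<alpha>}) (cv \<circ> src) (cv \<circ> tgt) ws (map cv vsc)"
    unfolding ccirc_def chain_def
  proof (intro conjI allI impI)
    fix i assume i: "i < length ws"
    show "{(cv \<circ> src) (ws ! i), (cv \<circ> tgt) (ws ! i)} = {map cv vsc ! i, map cv vsc ! Suc i}"
      using ch[rule_format, OF i] i lv by simp (metis image_empty image_insert)
  qed (use lv sE cl ne an in auto)
  show "Arn r (cv \<circ> src) (cv \<circ> tgt) ws (map cv vsc) = Arn r src tgt ws vsc"
    unfolding Arn_def
  proof (rule Dsum_cong)
    fix i assume i: "i < length ws"
    have "oc (cv \<circ> src) (cv \<circ> tgt) ws (map cv vsc) i = oc src tgt ws vsc i"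
    proof -
      have "cv (src (ws ! i)) \<noteq> cv (tgt (ws ! i))" using NP e[OF i] unfolding cv_def by blast
      from oc_contr[of cv "src (ws ! i)" "tgt (ws ! i)", OF this ch[rule_format, OF i]] show ?thesis unfolding oc_def using i lv by simp
    qed
    then show "coef r (cv \<circ> src) (cv \<circ> tgt) ws (map cv vsc) i = coef r src tgt ws vsc i"
      by (simp add: coef_def)
  qed
qed

lemma AO_lemma:
  assumes cc: "ccirc E src tgt ws vsc" and wsd: "ws = P @ \<alpha> # Q" and aP: "\<alpha> \<notin> set P" and aQ: "\<alpha> \<notin> set Q"
    and NP: "\<forall>e\<in>E - {\<alpha>}. contr_vert src tgt \<alpha> (src e) \<noteq> contr_vert src tgt \<alpha> (tgt e)"
    and ll: "\<forall>e\<in>E. src e \<noteq> tgt e" and r1: "r \<ge> 1"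
  defines "cv \<equiv> contr_vert src tgt \<alpha>" and "j \<equiv> length P"
  defines "vsc' \<equiv> map cv (remove_nth (Suc j) vsc)"
  shows "ccirc (E - {\<alpha>}) (cv \<circ> src) (cv \<circ> tgt) (P @ Q) vsc'"
    "\<exists>c. rho \<alpha> (Arn r src tgt ws vsc) = lscale c (listprod r (P @ Q))"
    "gp r \<alpha> (Arn r src tgt ws vsc) = lscale (sg r (length Q)) (Arn r (cv \<circ> src) (cv \<circ> tgt) (P @ Q) vsc')"
proof -
  define k where "k = length ws"
  have lv: "length vsc = Suc k" and ch: "\<forall>i<k. {src (ws ! i), tgt (ws ! i)} = {vsc ! i, vsc ! Suc i}"
    and sE: "set ws \<subseteq> E" and cl: "vsc ! 0 = vsc ! k"
    using cc by (auto simp: ccirc_def chain_def k_def)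
  have k2: "k \<ge> 2" using ccirc_len2[OF cc ll] k_def by simp
  have kj: "k = Suc (j + length Q)" using wsd by (simp add: k_def j_def)
  have wsj: "ws ! j = \<alpha>" using wsd by (simp add: j_def)
  have aE: "\<alpha> \<in> E" using sE wsd by auto
  have key: "cv (vsc ! j) = cv (vsc ! Suc j)"
  proof -
    have "{src \<alpha>, tgt \<alpha>} = {vsc ! j, vsc ! Suc j}" using ch wsj kj by (metis less_Suc_eq_le le_add1)
    then show ?thesis unfolding cv_def contr_vert_def by (auto simp: doubleton_eq_iff)
  qed
  have lv': "length vsc' = k" using lv kj by (simp add: vsc'_def length_remove_nth')
  have v'n: "vsc' ! i = cv (vsc ! (if i \<le> j then i else Suc i))" if "i < k" for i
    using that lv kj remove_nth_nth[of "Suc j" vsc i] by (simp add: vsc'_def length_remove_nth')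
  define \<phi> where "\<phi> i = (if i < j then i else Suc i)" for i
  have lPQ: "length (P @ Q) = k - 1" using kj j_def by simp
  have PQn: "(P @ Q) ! i = ws ! (\<phi> i)" if "i < k - 1" for i
  proof (cases "i < j")
    case True then show ?thesis using wsd by (simp add: \<phi>_def nth_append j_def)
  next
    case False
    then have "ws ! Suc i = Q ! (i - j)" using wsd j_def by (simp add: nth_append)
    then show ?thesis using False wsd by (simp add: \<phi>_def nth_append j_def)
  qed
  have phk: "\<phi> i < k" if "i < k - 1" for i using that kj by (simp add: \<phi>_def)
  have v1: "vsc' ! i = cv (vsc ! \<phi> i)" if "i < k - 1" for i
    using that v'n[of i] key by (auto simp: \<phi>_def)
  have v2: "vsc' ! Suc i = cv (vsc ! Suc (\<phi> i))" if "i < k - 1" for i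
    using that v'n[of "Suc i"] key by (auto simp: \<phi>_def)
  have eE: "(P @ Q) ! i \<in> E - {\<alpha>}" if "i < k - 1" for i
  proof -
    have "(P @ Q) ! i \<in> set (P @ Q)" using that lPQ by (intro nth_mem) simp
    moreover have "set (P @ Q) \<subseteq> E - {\<alpha>}" using sE wsd aP aQ by auto
    ultimately show ?thesis by blast
  qed
  have npi: "cv (src ((P @ Q) ! i)) \<noteq> cv (tgt ((P @ Q) ! i))" if "i < k - 1" for i
    using NP eE[OF that] unfolding cv_def by blast
  have chi: "{src ((P @ Q) ! i), tgt ((P @ Q) ! i)} = {vsc ! \<phi> i, vsc ! Suc (\<phi> i)}" if "i < k - 1" for i
    using ch phk[OF that] PQn[OF that] by simp
  show cc': "ccirc (E - {\<alpha>}) (cv \<circ> src) (cv \<circ> tgt) (P @ Q) vsc'"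
    unfolding ccirc_def chain_def
  proof (intro conjI allI impI)
    show "P @ Q \<noteq> []" using lPQ k2 by auto
    show "set (P @ Q) \<subseteq> E - {\<alpha>}" using sE wsd aP aQ by auto
    show "length vsc' = Suc (length (P @ Q))" using lv' lPQ k2 by simp
    show "vsc' ! 0 = vsc' ! length (P @ Q)"
    proof -
      have "vsc' ! 0 = cv (vsc ! 0)" using v'n[of 0] k2 by simp
      moreover have "vsc' ! (k - 1) = cv (vsc ! k)"
      proof (cases "k - 1 \<le> j")
        case True then have "j = k - 1" using kj by simp
        then show ?thesis using v'n[of "k - 1"] key k2 kj by simp
      next
        case False then show ?thesis using v'n[of "k - 1"] k2 by simp
      qed
      ultimately show ?thesis using cl lPQ by simp
    qed
  next
    fix i assume i: "i < length (P @ Q)"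
    then have i': "i < k - 1" using lPQ by simp
    show "{(cv \<circ> src) ((P @ Q) ! i), (cv \<circ> tgt) ((P @ Q) ! i)} = {vsc' ! i, vsc' ! Suc i}"
      using chi[OF i'] v1[OF i'] v2[OF i'] by simp (metis image_empty image_insert)
  qed
  have ocphi: "oc src tgt ws vsc (\<phi> i) = oc (cv \<circ> src) (cv \<circ> tgt) (P @ Q) vsc' i" if "i < k - 1" for i
    using oc_contr[of cv "src ((P @ Q) ! i)" "tgt ((P @ Q) ! i)", OF npi[OF that] chi[OF that]]
      PQn[OF that] v1[OF that] v2[OF that] unfolding oc_def by simp
  define f where "f = coef r src tgt ws vsc"
  define f' where "f' = coef r (cv \<circ> src) (cv \<circ> tgt) (P @ Q) vsc'"
  define s :: int where "s = (if even r then -1 else 1)"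
  define PP where "PP = listprod r P"
  define PQ where "PQ = listprod r Q"
  define DP where "DP = Dsum r f P"
  define DQ where "DQ = Dsum r (\<lambda>i. f (Suc (i + j))) Q"
  define DQ' where "DQ' = Dsum r (\<lambda>i. f' (i + j)) Q"
  have fP: "Dsum r f' P = DP" unfolding DP_def
  proof (rule Dsum_cong)
    fix i assume "i < length P"
    then have i: "i < j" "i < k - 1" using j_def kj by auto
    then show "f' i = f i" using ocphi[OF i(2)] by (simp add: f_def f'_def coef_def \<phi>_def)
  qed
  have fQ: "DQ = lscale s DQ'" unfolding DQ_def DQ'_def Dsum_scale[symmetric]
  proof (rule Dsum_cong)
    fix i assume "i < length Q"
    then have i: "i + j < k - 1" using kj by auto
    have "\<phi> (i + j) = Suc (i + j)" by (simp add: \<phi>_def)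
    then show "f (Suc (i + j)) = s * f' (i + j)"
      using ocphi[OF i] by (simp add: f_def f'_def coef_def s_def)
  qed
  have A: "Arn r src tgt ws vsc = ladd (lmult r DP (lmult r (gen \<alpha>) PQ))
      (lmult r PP (ladd (lscale (f j) PQ) (lmult r (gen \<alpha>) DQ)))"
  proof -
    have A0: "Arn r src tgt ws vsc = Dsum r f (P @ \<alpha> # Q)" unfolding Arn_def f_def[symmetric] using wsd by simp
    show ?thesis unfolding A0 Dsum_append Dsum_Cons
      by (simp add: DP_def PP_def PQ_def DQ_def j_def)
  qed
  have A': "Arn r (cv \<circ> src) (cv \<circ> tgt) (P @ Q) vsc' = ladd (lmult r DP PQ) (lmult r PP DQ')"
    unfolding Arn_def f'_def[symmetric] Dsum_append fP by (simp add: PP_def PQ_def DQ'_def j_def)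
  have rPP: "rho \<alpha> PP = PP" "gp r \<alpha> PP = lzero" using aP by (simp_all add: PP_def rho_free gp_free)
  have rPQ: "rho \<alpha> PQ = PQ" "gp r \<alpha> PQ = lzero" using aQ by (simp_all add: PQ_def rho_free gp_free)
  have rDP: "rho \<alpha> DP = DP" "gp r \<alpha> DP = lzero" using aP by (simp_all add: DP_def rho_free_D gp_free_D)
  have rDQ: "rho \<alpha> DQ = DQ" "gp r \<alpha> DQ = lzero" using aQ by (simp_all add: DQ_def rho_free_D gp_free_D)
  have "rho \<alpha> (Arn r src tgt ws vsc) = lscale (f j) (listprod r (P @ Q))"
    unfolding A by (simp add: rho_ladd rho_lmult rho_lscale rho_gen rPP rPQ rDQ rDP listprod_append
       PP_def[symmetric] PQ_def[symmetric]) (rule ext, simp add: ladd_def lzero_def lmult_lscale_right)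
  then show "\<exists>c. rho \<alpha> (Arn r src tgt ws vsc) = lscale c (listprod r (P @ Q))" by blast
  have gPQ: "gradinv r PQ = lscale (sg r (length Q)) PQ"
    using gradinv_hom[OF hom_listprod] by (simp add: PQ_def)
  have gDQ: "gradinv r DQ = lscale (sg r (length Q - 1)) DQ"
    using gradinv_hom[OF hom_Dsum] by (simp add: DQ_def)
  have sgs: "lscale (sg r (length Q - 1)) (lscale s DQ') = lscale (sg r (length Q)) DQ'"
  proof (cases "Q = []")
    case True then show ?thesis by (simp add: DQ'_def) (rule ext, simp add: lscale_def lzero_def)
  next
    case False
    then have "length Q = Suc (length Q - 1)" by simp
    then have "sg r (length Q) = sg r (length Q - 1) * s"
      using r1 by (cases "even r") (simp_all add: s_def sg_even sg_odd, metis power_Suc mult.commute mult_minus1)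
    then show ?thesis by (rule_tac ext) (simp add: lscale_def)
  qed
  have fPf: "fin PQ" "fin DQ" "fin DP" "fin PP" by (simp_all add: PQ_def DQ_def DP_def PP_def)
  have "gp r \<alpha> (Arn r src tgt ws vsc) = ladd (lmult r DP (gradinv r PQ)) (lmult r PP (gradinv r DQ))"
    unfolding A
    by (simp add: gp_ladd gp_leibniz rho_ladd rho_lmult rho_lscale rho_gen gp_gen gp_lscale rPP rPQ rDQ rDP
       lmult_lone_left fPf) (rule ext, simp add: ladd_def lzero_def lscale_def)
  also have "\<dots> = lscale (sg r (length Q)) (Arn r (cv \<circ> src) (cv \<circ> tgt) (P @ Q) vsc')"
    unfolding A' gPQ gDQ unfolding fQ sgs
    by (simp add: lmult_lscale_right) (rule ext, simp add: ladd_def lscale_def algebra_simps)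
  finally show "gp r \<alpha> (Arn r src tgt ws vsc) = lscale (sg r (length Q)) (Arn r (cv \<circ> src) (cv \<circ> tgt) (P @ Q) vsc')" .
qed

lemma ideal_gradinv: "x \<in> arnold_ideal r E src tgt \<Longrightarrow> gradinv r x \<in> arnold_ideal r E src tgt"
proof (induction rule: arnold_ideal.induct)
  case (gen ws vs)
  show ?case
  proof (cases "length ws = 1")
    case True
    then have "gradinv r (arnold r src tgt ws vs) = arnold r src tgt ws vs" by (simp add: arnold_def)
    then show ?thesis using arnold_ideal.gen[OF gen] by simp
  next
    case False
    then have "gradinv r (arnold r src tgt ws vs) = lscale (sg r (length ws - 1)) (arnold r src tgt ws vs)"
      by (simp add: arnold_Dsum gradinv_hom[OF hom_Dsum])
    then show ?thesis using ideal_lscale[OF arnold_ideal.gen[OF gen]] by simp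
  qed
next
  case zero then show ?case by (simp add: arnold_ideal.zero)
next
  case (add x y) then show ?case by (simp add: gradinv_ladd arnold_ideal.add)
next
  case (lmul x y) then show ?case by (simp add: gradinv_lmult arnold_ideal.lmul)
next
  case (rmul x y) then show ?case by (simp add: gradinv_lmult arnold_ideal.rmul)
qed

lemma coef_pm: "coef r src tgt ws vsc i * coef r src tgt ws vsc i = 1"
  by (simp add: coef_def oc_def power_add[symmetric] flip: power_add)

lemma listprod_ccirc_ideal:
  assumes "ccirc E src tgt ws vsc" "\<forall>e\<in>E. src e \<noteq> tgt e"
  shows "listprod r ws \<in> arnold_ideal r E src tgt"
proof -
  obtain w rest where ws: "ws = w # rest" using assms(1) by (cases ws) (auto simp: ccirc_def)
  have wE: "w \<in> E" using assms(1) ws by (auto simp: ccirc_def)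
  define f where "f = coef r src tgt ws vsc"
  have "lmult r (gen w) (Arn r src tgt ws vsc) = lscale (f 0) (listprod r ws)"
    unfolding Arn_def f_def[symmetric] using ws Dsum_Cons[of r f w rest]
    by (simp add: lmult_ladd_right lmult_lscale_right lmult_assoc[symmetric] lmult_gen_gen)
       (rule ext, simp add: ladd_def lzero_def)
  then have "lscale (f 0) (lmult r (gen w) (Arn r src tgt ws vsc)) = listprod r ws"
    using coef_pm[of r src tgt ws vsc 0] by (simp add: f_def lscale_def mult.assoc[symmetric])
  moreover have "lmult r (gen w) (Arn r src tgt ws vsc) \<in> arnold_ideal r E src tgt"
    by (rule arnold_ideal.lmul[OF ccirc_in_ideal[OF assms] in_lam_gen[OF wE]])
  ultimately show ?thesis using ideal_lscale by metis
qed

lemma dup_alpha_zero: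
  assumes cc: "ccirc E src tgt ws vsc" and ds: "distinct (take (length ws) vsc)"
    and ll: "\<forall>e\<in>E. src e \<noteq> tgt e" and pq: "p < q" "q < length ws" and wp: "ws ! p = a" "ws ! q = a"
  shows "Arn r src tgt ws vsc = lzero"
proof -
  define k where "k = length ws"
  have lv: "length vsc = Suc k" and ch: "\<forall>i<k. {src (ws ! i), tgt (ws ! i)} = {vsc ! i, vsc ! Suc i}"
    and sE: "set ws \<subseteq> E" and cl: "vsc ! 0 = vsc ! k"
    using cc by (auto simp: ccirc_def chain_def k_def)
  have dist: "a1 = b1" if "a1 < k" "b1 < k" "vsc ! a1 = vsc ! b1" for a1 b1
    using ds that lv by (simp add: k_def nth_eq_iff_index_eq[symmetric])
  have aE: "a \<in> E" using wp pq sE k_def by (metis nth_mem order_less_trans subsetD)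
  have e1: "{src a, tgt a} = {vsc ! p, vsc ! Suc p}" using ch[rule_format, of p] wp pq k_def by simp
  have e2: "{src a, tgt a} = {vsc ! q, vsc ! Suc q}" using ch[rule_format, of q] wp pq k_def by simp
  have n1: "vsc ! p \<noteq> vsc ! Suc p" using e1 ll aE by (metis doubleton_eq_iff insert_absorb2)
  have n2: "vsc ! q \<noteq> vsc ! Suc q" using e2 ll aE by (metis doubleton_eq_iff insert_absorb2)
  have "vsc ! q \<noteq> vsc ! p" using dist[of q p] pq k_def by auto
  moreover have "vsc ! q \<in> {vsc ! p, vsc ! Suc p}" using e1 e2 by (metis insertI1)
  ultimately have "vsc ! q = vsc ! Suc p" by simp
  then have q: "q = Suc p" using dist[of q "Suc p"] pq k_def by simp
  have "vsc ! Suc q \<in> {vsc ! p, vsc ! Suc p}" using e1 e2 by (metis insertI1 insert_commute)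
  then have "vsc ! Suc q = vsc ! p" using n2 q by auto
  moreover have "\<not> Suc q < k"
  proof
    assume "Suc q < k"
    then have "Suc q = p" using dist[of "Suc q" p] pq k_def \<open>vsc ! Suc q = vsc ! p\<close> by simp
    then show False using q by simp
  qed
  ultimately have k2: "k = Suc q" "vsc ! p = vsc ! 0" using pq k_def cl
    by (metis Suc_lessI)+
  then have p0: "p = 0" using dist[of p 0] pq by simp
  have ws2: "ws = [a, a]" using k2 p0 q wp k_def
    by (cases ws; cases "tl ws"; auto)
  have "coef r src tgt ws vsc 0 + coef r src tgt ws vsc 1 = 0"
  proof (cases "even r")
    case True then show ?thesis by (simp add: coef_def)
  next
    case False
    have v: "vsc ! 2 = vsc ! 0" using cl k2 p0 q by (simp add: numeral_2_eq_2)
    have "{src a, tgt a} = {vsc ! 0, vsc ! 1}" using e1 p0 by simp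
    moreover have "src a \<noteq> tgt a" using ll aE by blast
    ultimately have "(src a = vsc ! 0 \<and> tgt a = vsc ! 1) \<or> (src a = vsc ! 1 \<and> tgt a = vsc ! 0) \<and> src a \<noteq> tgt a"
      by (metis doubleton_eq_iff)
    moreover have "oc src tgt ws vsc 0 = (if src a = vsc ! 0 \<and> tgt a = vsc ! 1 then 1 else -1)"
      "oc src tgt ws vsc 1 = (if src a = vsc ! 1 \<and> tgt a = vsc ! 0 then 1 else -1)"
      using v ws2 by (simp_all add: oc_def numeral_2_eq_2)
    moreover have "src a \<noteq> tgt a" using ll aE by blast
    ultimately have "oc src tgt ws vsc 0 + oc src tgt ws vsc 1 = 0"
      by (smt (verit))
    then show ?thesis using False by (simp add: coef_def)
  qed
  then show ?thesis unfolding Arn_def Dsum_def ws2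
    by (rule_tac ext) (simp add: lzero_def numeral_2_eq_2 remove_nth_def distrib_right[symmetric])
qed

lemma ideal_full:
  assumes fE: "finite E" and par: "\<beta> \<in> E" "src' \<beta> = tgt' \<beta>" and y: "in_lam E y"
  shows "y \<in> arnold_ideal r E src' tgt'"
proof -
  have c: "circuit E src' tgt' [\<beta>] [src' \<beta>]" using par by (simp add: circuit_def)
  have "arnold r src' tgt' [\<beta>] [src' \<beta>] = lone" by (simp add: arnold_def)
  then have "lone \<in> arnold_ideal r E src' tgt'" using arnold_ideal.gen[where r=r, OF c] by simp
  from arnold_ideal.rmul[OF this y] have "lmult r lone y \<in> arnold_ideal r E src' tgt'" .
  then show ?thesis using in_lam_fin[OF fE y] by (simp add: lmult_lone_left)
qed

lemma T_closed:
  fixes I' :: "('e::linorder) lam set" and r :: nat and \<alpha> :: 'e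
  defines "T \<equiv> {x. rho \<alpha> x \<in> I' \<and> gp r \<alpha> x \<in> I'}"
  assumes I': "I' = arnold_ideal r (E - {\<alpha>}) src' tgt'"
  shows "x \<in> T \<Longrightarrow> y \<in> T \<Longrightarrow> ladd x y \<in> T"
    and "x \<in> T \<Longrightarrow> lscale c x \<in> T"
    and "x \<in> T \<Longrightarrow> in_lam E y \<Longrightarrow> lmult r y x \<in> T"
    and "x \<in> T \<Longrightarrow> in_lam E y \<Longrightarrow> lmult r x y \<in> T"
    and "lzero \<in> T"
proof -
  show "x \<in> T \<Longrightarrow> y \<in> T \<Longrightarrow> ladd x y \<in> T"
    unfolding T_def I' by (simp add: rho_ladd gp_ladd arnold_ideal.add)
  show "x \<in> T \<Longrightarrow> lscale c x \<in> T"
    unfolding T_def I' by (simp add: rho_lscale gp_lscale ideal_lscale)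
  show "lzero \<in> T" unfolding T_def I' by (simp add: arnold_ideal.zero)
  show "x \<in> T \<Longrightarrow> in_lam E y \<Longrightarrow> lmult r y x \<in> T"
  proof -
    assume x: "x \<in> T" and y: "in_lam E y"
    have r1: "rho \<alpha> x \<in> I'" and g1: "gp r \<alpha> x \<in> I'" using x by (auto simp: T_def)
    have ry: "in_lam (E - {\<alpha>}) (rho \<alpha> y)" "in_lam (E - {\<alpha>}) (gp r \<alpha> y)"
      using y by (simp_all add: in_lam_rho in_lam_gp)
    have "rho \<alpha> (lmult r y x) \<in> I'" unfolding rho_lmult I'
      using arnold_ideal.lmul[OF r1[unfolded I'] ry(1)] .
    moreover have "gp r \<alpha> (lmult r y x) \<in> I'" unfolding gp_leibniz I'
      by (rule arnold_ideal.add[OF arnold_ideal.lmul[OF g1[unfolded I'] ry(1)]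
            arnold_ideal.lmul[OF ideal_gradinv[OF r1[unfolded I']] ry(2)]])
    ultimately show ?thesis by (simp add: T_def)
  qed
  show "x \<in> T \<Longrightarrow> in_lam E y \<Longrightarrow> lmult r x y \<in> T"
  proof -
    assume x: "x \<in> T" and y: "in_lam E y"
    have r1: "rho \<alpha> x \<in> I'" and g1: "gp r \<alpha> x \<in> I'" using x by (auto simp: T_def)
    have ry: "in_lam (E - {\<alpha>}) (rho \<alpha> y)" "in_lam (E - {\<alpha>}) (gp r \<alpha> y)"
      using y by (simp_all add: in_lam_rho in_lam_gp)
    have "rho \<alpha> (lmult r x y) \<in> I'" unfolding rho_lmult I'
      using arnold_ideal.rmul[OF r1[unfolded I'] ry(1)] .
    moreover have "gp r \<alpha> (lmult r x y) \<in> I'" unfolding gp_leibniz I'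
      by (rule arnold_ideal.add[OF arnold_ideal.rmul[OF r1[unfolded I'] ry(2)]
            arnold_ideal.rmul[OF g1[unfolded I'] in_lam_gradinv[OF ry(1)]]])
    ultimately show ?thesis by (simp add: T_def)
  qed
qed

lemma H3:
  fixes \<alpha> :: "'e::linorder" and src tgt :: "'e \<Rightarrow> 'v"
  assumes fE: "finite E" and ll: "\<forall>e\<in>E. src e \<noteq> tgt e" and r1: "r \<ge> 1"
    and x: "x \<in> arnold_ideal r E src tgt"
  defines "cv \<equiv> contr_vert src tgt \<alpha>"
  shows "rho \<alpha> x \<in> arnold_ideal r (E - {\<alpha>}) (cv \<circ> src) (cv \<circ> tgt) \<and>
         gp r \<alpha> x \<in> arnold_ideal r (E - {\<alpha>}) (cv \<circ> src) (cv \<circ> tgt)"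
proof -
  define I' where "I' = arnold_ideal r (E - {\<alpha>}) (cv \<circ> src) (cv \<circ> tgt)"
  define T where "T = {x. rho \<alpha> x \<in> I' \<and> gp r \<alpha> x \<in> I'}"
  note TC = T_closed[where I' = I' and \<alpha> = \<alpha> and r = r and E = E, OF I'_def, folded T_def]
  have xE: "in_lam E x" using ideal_in_lam[OF x] .
  show ?thesis
  proof (cases "\<exists>\<beta>\<in>E - {\<alpha>}. cv (src \<beta>) = cv (tgt \<beta>)")
    case True
    then obtain \<beta> where b: "\<beta> \<in> E - {\<alpha>}" "(cv \<circ> src) \<beta> = (cv \<circ> tgt) \<beta>" by auto
    have f: "finite (E - {\<alpha>})" using fE by simp
    show ?thesis
      using ideal_full[of "E - {\<alpha>}" \<beta> "cv \<circ> src" "cv \<circ> tgt", OF f b] in_lam_rho[OF xE] in_lam_gp[OF xE] by blast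
  next
    case False
    then have NP: "\<forall>e\<in>E - {\<alpha>}. contr_vert src tgt \<alpha> (src e) \<noteq> contr_vert src tgt \<alpha> (tgt e)"
      by (simp add: cv_def)
    have NP': "\<forall>e\<in>E - {\<alpha>}. (cv \<circ> src) e \<noteq> (cv \<circ> tgt) e" using NP by (simp add: cv_def)
    have base: "Arn r src tgt ws vsc \<in> T" if cc: "ccirc E src tgt ws vsc" and ds: "distinct (take (length ws) vsc)" for ws vsc
    proof (cases "\<alpha> \<in> set ws")
      case False
      note na = NA_lemma[OF cc False NP, folded cv_def]
      have "Arn r src tgt ws vsc \<in> I'" unfolding I'_def na(2)[symmetric, of r]
        by (rule ccirc_in_ideal[OF na(1) NP'])
      moreover have "rho \<alpha> (Arn r src tgt ws vsc) = Arn r src tgt ws vsc"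
        "gp r \<alpha> (Arn r src tgt ws vsc) = lzero"
        using False by (simp_all add: Arn_def rho_free_D gp_free_D)
      ultimately show ?thesis by (simp add: T_def I'_def arnold_ideal.zero)
    next
      case True
      obtain P Q where wsd: "ws = P @ \<alpha> # Q" and aP: "\<alpha> \<notin> set P"
        using split_list_first[OF True] by blast
      show ?thesis
      proof (cases "\<alpha> \<in> set Q")
        case True
        then obtain m where m: "m < length Q" "Q ! m = \<alpha>" by (metis in_set_conv_nth)
        have "Arn r src tgt ws vsc = lzero"
        proof (rule dup_alpha_zero[OF cc ds ll, of "length P" "Suc (length P + m)" \<alpha>])
          show "length P < Suc (length P + m)" by simp
          show "Suc (length P + m) < length ws" using m wsd by simp
          show "ws ! length P = \<alpha>" using wsd by simp
          show "ws ! Suc (length P + m) = \<alpha>" using wsd m by (simp add: nth_append)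
        qed
        then show ?thesis using TC(5) by simp
      next
        case False
        note ao = AO_lemma[OF cc wsd aP False NP ll r1, folded cv_def]
        obtain c where rc: "rho \<alpha> (Arn r src tgt ws vsc) = lscale c (listprod r (P @ Q))" using ao(2) by blast
        have "rho \<alpha> (Arn r src tgt ws vsc) \<in> I'"
          unfolding rc I'_def by (rule ideal_lscale[OF listprod_ccirc_ideal[OF ao(1) NP']])
        moreover have "gp r \<alpha> (Arn r src tgt ws vsc) \<in> I'"
          unfolding ao(3) I'_def by (rule ideal_lscale[OF ccirc_in_ideal[OF ao(1) NP']])
        ultimately show ?thesis by (simp add: T_def)
      qed
    qed
    have "x \<in> T" using x
    proof (induction rule: arnold_ideal.induct)
      case (gen ws vs)
      note cc = circuit_to_ccirc(1)[OF gen]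
      have l2: "length ws \<ge> 2" using ccirc_len2[OF cc ll] .
      have "Arn r src tgt ws (vs @ [vs ! 0]) \<in> T"
        by (rule arn_induct[OF TC(1) TC(2) TC(3) TC(4) base r1 cc]) auto
      then show ?case using circuit_to_ccirc(2)[OF gen l2] by simp
    next
      case zero then show ?case using TC(5) by simp
    next
      case (add x y) then show ?case using TC(1) by simp
    next
      case (lmul x y) then show ?case using TC(3) by simp
    next
      case (rmul x y) then show ?case using TC(4) by simp
    qed
    then show ?thesis by (simp add: T_def I'_def)
  qed
qed

lemma insert_nth_nth:
  assumes "m \<le> length xs" "i \<le> length xs"
  shows "(take m xs @ a # drop m xs) ! i = (if i < m then xs ! i else if i = m then a else xs ! (i - 1))"
  using assms by (auto simp: nth_append min_def nth_Cons' not_less)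

lemma H1_base:
  fixes \<alpha> :: "'e::linorder" and src tgt :: "'e \<Rightarrow> 'v"
  assumes cc: "ccirc (E - {\<alpha>}) (contr_vert src tgt \<alpha> \<circ> src) (contr_vert src tgt \<alpha> \<circ> tgt) ws vsc'"
    and ds: "distinct (take (length ws) vsc')"
    and NP: "\<forall>e\<in>E - {\<alpha>}. contr_vert src tgt \<alpha> (src e) \<noteq> contr_vert src tgt \<alpha> (tgt e)"
    and ll: "\<forall>e\<in>E. src e \<noteq> tgt e" and aE: "\<alpha> \<in> E" and r1: "r \<ge> 1" and fE: "finite E"
  shows "\<exists>i\<in>arnold_ideal r E src tgt.
     Arn r (contr_vert src tgt \<alpha> \<circ> src) (contr_vert src tgt \<alpha> \<circ> tgt) ws vsc' = gp r \<alpha> i"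
proof -
  define cv where "cv = contr_vert src tgt \<alpha>"
  define k where "k = length ws"
  have lv: "length vsc' = Suc k" and ch: "\<forall>i<k. {cv (src (ws ! i)), cv (tgt (ws ! i))} = {vsc' ! i, vsc' ! Suc i}"
    and sE: "set ws \<subseteq> E - {\<alpha>}" and cl: "vsc' ! 0 = vsc' ! k" and ne: "ws \<noteq> []"
    using cc by (auto simp: ccirc_def chain_def k_def cv_def)
  have k1: "k \<ge> 1" using ne k_def by (cases ws) auto
  have wE: "ws ! i \<in> E - {\<alpha>}" if "i < k" for i using sE that k_def nth_mem by fastforce
  have dist: "a1 = b1" if "a1 < k" "b1 < k" "vsc' ! a1 = vsc' ! b1" for a1 b1
    using ds that lv by (simp add: k_def nth_eq_iff_index_eq[symmetric])
  define lift where "lift e u = (if cv (src e) = u then src e else tgt e)" for e u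
  define st where "st i = lift (ws ! i) (vsc' ! i)" for i
  define en where "en i = lift (ws ! i) (vsc' ! Suc i)" for i
  have edge: "{st i, en i} = {src (ws ! i), tgt (ws ! i)} \<and> cv (st i) = vsc' ! i \<and> cv (en i) = vsc' ! Suc i"
    if i: "i < k" for i
  proof -
    have n: "cv (src (ws ! i)) \<noteq> cv (tgt (ws ! i))" using NP wE[OF i] by (simp add: cv_def)
    have c: "{cv (src (ws ! i)), cv (tgt (ws ! i))} = {vsc' ! i, vsc' ! Suc i}" using ch i by simp
    show ?thesis
    proof (cases "cv (src (ws ! i)) = vsc' ! i")
      case True
      then have "cv (tgt (ws ! i)) = vsc' ! Suc i" using c n by (metis doubleton_eq_iff)
      then show ?thesis using True n by (simp add: st_def en_def lift_def)
    next
      case False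
      then have "cv (tgt (ws ! i)) = vsc' ! i" "cv (src (ws ! i)) = vsc' ! Suc i" using c n by (metis doubleton_eq_iff)+
      then show ?thesis using False n by (auto simp: st_def en_def lift_def)
    qed
  qed
  define L where "L = map st [0..<k] @ [st 0]"
  have lL: "length L = Suc k" by (simp add: L_def)
  have Ln: "L ! i = (if i < k then st i else st 0)" if "i \<le> k" for i
    using that by (auto simp: L_def nth_append)
  have cL: "cv (L ! i) = vsc' ! i" if "i \<le> k" for i
    using that Ln edge k1 cl by (cases "i < k") auto
  define mm where "mm m \<longleftrightarrow> en (m - 1) \<noteq> L ! m" for m
  have mm_v: "vsc' ! m = src \<alpha> \<and> {en (m - 1), L ! m} = {src \<alpha>, tgt \<alpha>}" if "1 \<le> m" "m \<le> k" "mm m" for m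
  proof -
    have "cv (en (m - 1)) = vsc' ! m" using edge[of "m - 1"] that by simp
    moreover have "cv (L ! m) = vsc' ! m" using cL that by simp
    ultimately have "cv (en (m - 1)) = cv (L ! m)" by simp
    from cv_inj[OF this[unfolded cv_def]] that(3) show ?thesis
      using \<open>cv (L ! m) = vsc' ! m\<close> \<open>cv (en (m - 1)) = vsc' ! m\<close> by (auto simp: mm_def cv_def)
  qed
  have mm_uniq: "m1 = m2" if "1 \<le> m1" "m1 \<le> k" "mm m1" "1 \<le> m2" "m2 \<le> k" "mm m2" for m1 m2
  proof (rule ccontr)
    assume ne: "m1 \<noteq> m2"
    have e: "vsc' ! m1 = vsc' ! m2" using mm_v[of m1] mm_v[of m2] that by simp
    define f where "f m = (if m = k then 0 else m)" for m
    have fv: "vsc' ! (f m) = vsc' ! m" "f m < k" if "m \<le> k" for m using that cl k1 by (auto simp: f_def)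
    have "f m1 = f m2" using dist[of "f m1" "f m2"] fv[of m1] fv[of m2] that e by simp
    then show False using ne that by (auto simp: f_def split: if_splits)
  qed
  have ws_free: "\<alpha> \<notin> set ws" using sE by auto
  show ?thesis
  proof (cases "\<exists>m. 1 \<le> m \<and> m \<le> k \<and> mm m")
    case False
    have ccL: "ccirc E src tgt ws L"
      unfolding ccirc_def chain_def
    proof (intro conjI allI impI)
      show "ws \<noteq> []" by (rule ne)
      show "set ws \<subseteq> E" using sE by auto
      show "length L = Suc (length ws)" using lL k_def by simp
      show "L ! 0 = L ! length ws" using Ln[of 0] Ln[of k] k1 k_def by simp
    next
      fix i assume i: "i < length ws"
      have "\<not> mm (Suc i)" using False i k_def by auto
      then have "L ! Suc i = en i" by (simp add: mm_def)
      then show "{src (ws ! i), tgt (ws ! i)} = {L ! i, L ! Suc i}"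
        using edge[of i] Ln[of i] i k_def by auto
    qed
    have mL: "map cv L = vsc'" using cL lL lv by (intro nth_equalityI) auto
    note na = NA_lemma[OF ccL ws_free NP, folded cv_def, unfolded mL]
    define i where "i = lmult r (Arn r src tgt ws L) (gen \<alpha>)"
    have "i \<in> arnold_ideal r E src tgt" unfolding i_def
      by (rule arnold_ideal.rmul[OF ccirc_in_ideal[OF ccL ll] in_lam_gen[OF aE]])
    moreover have "gp r \<alpha> i = Arn r src tgt ws L"
      unfolding i_def by (simp add: gp_mult_gen Arn_def rho_free_D ws_free)
    ultimately show ?thesis using na(2) unfolding cv_def by metis
  next
    case True
    then obtain m where m: "1 \<le> m" "m \<le> k" "mm m" by blast
    have nmm: "\<not> mm i" if "1 \<le> i" "i \<le> k" "i \<noteq> m" for i using mm_uniq[OF m] that by blast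
    have mv: "{en (m - 1), L ! m} = {src \<alpha>, tgt \<alpha>}" using mm_v[OF m] by simp
    define ws2 where "ws2 = take m ws @ \<alpha> # drop m ws"
    define L2 where "L2 = take m L @ en (m - 1) # drop m L"
    have lws2: "length ws2 = Suc k" using m k_def by (simp add: ws2_def)
    have lL2: "length L2 = Suc (Suc k)" using m lL by (simp add: L2_def)
    have w2n: "ws2 ! i = (if i < m then ws ! i else if i = m then \<alpha> else ws ! (i - 1))" if "i \<le> k" for i
      unfolding ws2_def using insert_nth_nth[of m ws i \<alpha>] that m k_def by simp
    have L2n: "L2 ! i = (if i < m then L ! i else if i = m then en (m - 1) else L ! (i - 1))" if "i \<le> Suc k" for i
      unfolding L2_def using insert_nth_nth[of m L i "en (m - 1)"] that m lL by simp
    have cc2: "ccirc E src tgt ws2 L2"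
      unfolding ccirc_def chain_def
    proof (intro conjI allI impI)
      show "ws2 \<noteq> []" by (simp add: ws2_def)
      show "set ws2 \<subseteq> E" using sE aE by (auto simp: ws2_def dest: in_set_takeD in_set_dropD)
      show "length L2 = Suc (length ws2)" using lL2 lws2 by simp
      show "L2 ! 0 = L2 ! length ws2" using L2n[of 0] L2n[of "Suc k"] Ln[of 0] Ln[of k] m lws2 by simp
    next
      fix i assume i: "i < length ws2"
      then have ik: "i \<le> k" using lws2 by simp
      show "{src (ws2 ! i), tgt (ws2 ! i)} = {L2 ! i, L2 ! Suc i}"
      proof (cases "Suc i < m")
        case True
        have "L ! Suc i = en i" using nmm[of "Suc i"] True m by (simp add: mm_def)
        moreover have "ws2 ! i = ws ! i" "L2 ! i = L ! i" "L2 ! Suc i = L ! Suc i" "L ! i = st i"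
          using w2n[of i] L2n[of i] L2n[of "Suc i"] Ln[of i] True ik m by simp_all
        ultimately show ?thesis using edge[of i] True m by simp
      next
        case False
        show ?thesis
        proof (cases "Suc i = m")
          case True
          have mi: "m - 1 = i" using True by simp
          have "ws2 ! i = ws ! i" "L2 ! i = L ! i" "L2 ! Suc i = en i" "L ! i = st i"
            using w2n[of i] L2n[of i] L2n[of "Suc i"] Ln[of i] True ik m mi by simp_all
          then show ?thesis using edge[of i] True m by simp
        next
          case False2: False
          show ?thesis
          proof (cases "i = m")
            case True
            have "ws2 ! i = \<alpha>" "L2 ! i = en (m - 1)" "L2 ! Suc i = L ! m"
              using w2n[of i] L2n[of i] L2n[of "Suc i"] True ik by simp_all
            then show ?thesis using mv True by simp
          next
            case False3: False
            then have im: "m < i" using False False2 by simp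
            have "\<not> mm i" using nmm[of i] im m ik by simp
            then have "L ! i = en (i - 1)" by (simp add: mm_def)
            moreover have i1: "i - 1 < k" using ik im by simp
            moreover have "ws2 ! i = ws ! (i - 1)" "L2 ! i = L ! (i - 1)" "L2 ! Suc i = L ! i" "L ! (i - 1) = st (i - 1)"
              using w2n[of i] L2n[of i] L2n[of "Suc i"] Ln[of "i - 1"] im ik by simp_all
            ultimately show ?thesis using edge[OF i1] by simp
          qed
        qed
      qed
    qed
    have wsd: "ws2 = take m ws @ \<alpha> # drop m ws" by (simp add: ws2_def)
    have fr: "\<alpha> \<notin> set (take m ws)" "\<alpha> \<notin> set (drop m ws)" using ws_free by (auto dest: in_set_takeD in_set_dropD)
    note ao = AO_lemma[OF cc2 wsd fr NP ll r1, folded cv_def]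
    have ltm: "length (take m ws) = m" using m k_def by simp
    have vv: "map cv (remove_nth (Suc m) L2) = vsc'"
    proof (rule nth_equalityI)
      show "length (map cv (remove_nth (Suc m) L2)) = length vsc'"
        using lL2 lv m by (simp add: length_remove_nth')
    next
      fix i assume "i < length (map cv (remove_nth (Suc m) L2))"
      then have i: "i \<le> k" using lL2 m by (simp add: length_remove_nth')
      have "remove_nth (Suc m) L2 ! i = (if i < Suc m then L2 ! i else L2 ! Suc i)"
        using remove_nth_nth[of "Suc m" L2 i] lL2 m i by simp
      moreover have "i < length (remove_nth (Suc m) L2)" using lL2 i m by (simp add: length_remove_nth')
      moreover have "cv (en (m - 1)) = vsc' ! m" using edge[of "m - 1"] m by simp
      ultimately show "map cv (remove_nth (Suc m) L2) ! i = vsc' ! i"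
        using L2n[of i] L2n[of "Suc i"] i m cL[of i]
        by (cases "i < m"; cases "i = m") auto
    qed
    have g: "gp r \<alpha> (Arn r src tgt ws2 L2) = lscale (sg r (length (drop m ws))) (Arn r (cv \<circ> src) (cv \<circ> tgt) ws vsc')"
      using ao(3) unfolding ltm vv by simp
    define c where "c = sg r (length (drop m ws))"
    define i where "i = lscale c (Arn r src tgt ws2 L2)"
    have "i \<in> arnold_ideal r E src tgt" unfolding i_def
      by (rule ideal_lscale[OF ccirc_in_ideal[OF cc2 ll]])
    moreover have "gp r \<alpha> i = Arn r (cv \<circ> src) (cv \<circ> tgt) ws vsc'"
      unfolding i_def gp_lscale g c_def[symmetric]
      by (rule ext) (simp add: lscale_def mult.assoc[symmetric] c_def sg_sq)
    ultimately show ?thesis unfolding cv_def by metis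
  qed
qed

lemma rho_rho[simp]: "rho a (rho a x) = rho a x" by (rule ext) (simp add: rho_def)

lemma ladd_lzero_right[simp]: "ladd x lzero = x" by (rule ext) (simp add: ladd_def lzero_def)
lemma ladd_lzero_left[simp]: "ladd lzero x = x" by (rule ext) (simp add: ladd_def lzero_def)

lemma H1:
  fixes \<alpha> :: "'e::linorder" and src tgt :: "'e \<Rightarrow> 'v"
  assumes fE: "finite E" and ll: "\<forall>e\<in>E. src e \<noteq> tgt e" and aE: "\<alpha> \<in> E" and r1: "r \<ge> 1"
    and y: "y \<in> arnold_ideal r (E - {\<alpha>}) (contr_vert src tgt \<alpha> \<circ> src) (contr_vert src tgt \<alpha> \<circ> tgt)"
  shows "\<exists>i\<in>arnold_ideal r E src tgt. y = gp r \<alpha> i"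
proof -
  define cv where "cv = contr_vert src tgt \<alpha>"
  define I where "I = arnold_ideal r E src tgt"
  define K where "K = {y. \<exists>i\<in>I. y = gp r \<alpha> i}"
  have Kadd: "ladd a b \<in> K" if ha: "a \<in> K" "b \<in> K" for a b
  proof -
    obtain i1 i2 where "i1 \<in> I" "i2 \<in> I" "a = gp r \<alpha> i1" "b = gp r \<alpha> i2" using ha unfolding K_def by blast
    then show ?thesis unfolding K_def I_def by (auto simp: gp_ladd intro!: bexI[of _ "ladd i1 i2"] arnold_ideal.add)
  qed
  have Kscl: "lscale c a \<in> K" if ha: "a \<in> K" for a c
  proof -
    obtain i1 where "i1 \<in> I" "a = gp r \<alpha> i1" using ha unfolding K_def by blast
    then show ?thesis unfolding K_def I_def by (auto simp: gp_lscale intro!: bexI[of _ "lscale c i1"] ideal_lscale)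
  qed
  have Klm: "lmult r z a \<in> K" if ha: "a \<in> K" "in_lam (E - {\<alpha>}) z" for a z
  proof -
    obtain i1 where i1: "i1 \<in> I" "a = gp r \<alpha> i1" using ha unfolding K_def by blast
    have zE: "in_lam E z" using ha(2) in_lam_mono by blast
    have "gp r \<alpha> (lmult r z i1) = lmult r z a"
      unfolding gp_leibniz rho_id[OF ha(2)] gp_zero[OF ha(2)] i1(2) by simp
    moreover have "lmult r z i1 \<in> I" using arnold_ideal.lmul[OF i1(1)[unfolded I_def] zE] by (simp add: I_def)
    ultimately show ?thesis unfolding K_def by (metis (mono_tags, lifting) mem_Collect_eq)
  qed
  have Krm: "lmult r a z \<in> K" if ha: "a \<in> K" "in_lam (E - {\<alpha>}) z" for a z
  proof -
    obtain i1 where i1: "i1 \<in> I" "a = gp r \<alpha> i1" using ha unfolding K_def by blast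
    have gz: "in_lam (E - {\<alpha>}) (gradinv r z)" using ha(2) by simp
    have zE: "in_lam E (gradinv r z)" using gz in_lam_mono by blast
    have "gp r \<alpha> (lmult r i1 (gradinv r z)) = lmult r a z"
      unfolding gp_leibniz rho_id[OF gz] gp_zero[OF gz] i1(2) by simp
    moreover have "lmult r i1 (gradinv r z) \<in> I" using arnold_ideal.rmul[OF i1(1)[unfolded I_def] zE] by (simp add: I_def)
    ultimately show ?thesis unfolding K_def by (metis (mono_tags, lifting) mem_Collect_eq)
  qed
  have Kz: "lzero \<in> K" unfolding K_def I_def using arnold_ideal.zero by force
  have fE': "finite (E - {\<alpha>})" using fE by simp
  show ?thesis
  proof (cases "\<exists>\<beta>\<in>E - {\<alpha>}. cv (src \<beta>) = cv (tgt \<beta>)")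
    case True
    then obtain \<beta> where b: "\<beta> \<in> E - {\<alpha>}" "cv (src \<beta>) = cv (tgt \<beta>)" by auto
    have "src \<beta> \<noteq> tgt \<beta>" using ll b by auto
    then have sb: "{src \<beta>, tgt \<beta>} = {src \<alpha>, tgt \<alpha>}" using cv_inj[of src tgt \<alpha> "src \<beta>" "tgt \<beta>"] b by (simp add: cv_def)
    define vv where "vv = [src \<alpha>, tgt \<alpha>, src \<alpha>]"
    have cc: "ccirc E src tgt [\<alpha>, \<beta>] vv"
      unfolding ccirc_def chain_def vv_def using aE b sb
      by (auto simp: less_Suc_eq insert_commute numeral_2_eq_2)
    define f where "f = coef r src tgt [\<alpha>, \<beta>] vv"
    have "Arn r src tgt [\<alpha>, \<beta>] vv = ladd (lscale (f 0) (gen \<beta>)) (lscale (f 1) (gen \<alpha>))"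
      unfolding Arn_def f_def[symmetric]
      by (rule ext) (simp add: Dsum_def ladd_def lscale_def numeral_2_eq_2 remove_nth_def lmult_lone_right)
    then have "gp r \<alpha> (Arn r src tgt [\<alpha>, \<beta>] vv) = lscale (f 1) lone"
      using b by (simp add: gp_ladd gp_lscale gp_gen) (rule ext, simp add: ladd_def lscale_def lzero_def)
    then have l1: "gp r \<alpha> (lscale (f 1) (Arn r src tgt [\<alpha>, \<beta>] vv)) = lone"
      using coef_pm[of r src tgt "[\<alpha>, \<beta>]" vv 1] by (simp add: gp_lscale f_def) (rule ext, simp add: lscale_def mult.assoc[symmetric])
    have l2: "lscale (f 1) (Arn r src tgt [\<alpha>, \<beta>] vv) \<in> I"
      unfolding I_def by (rule ideal_lscale[OF ccirc_in_ideal[OF cc ll]])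
    have "lone \<in> K" unfolding K_def by (rule CollectI, rule bexI[OF _ l2]) (rule l1[symmetric])
    moreover have yl: "in_lam (E - {\<alpha>}) y" using ideal_in_lam[OF y] .
    ultimately have "lmult r y lone \<in> K" using Klm by blast
    then have "y \<in> K" using in_lam_fin[OF fE' yl] by (simp add: lmult_lone_right)
    then show ?thesis by (simp add: K_def I_def)
  next
    case False
    then have NP: "\<forall>e\<in>E - {\<alpha>}. contr_vert src tgt \<alpha> (src e) \<noteq> contr_vert src tgt \<alpha> (tgt e)"
      by (simp add: cv_def)
    have NP': "\<forall>e\<in>E - {\<alpha>}. (cv \<circ> src) e \<noteq> (cv \<circ> tgt) e" using NP by (simp add: cv_def)
    have base: "Arn r (cv \<circ> src) (cv \<circ> tgt) ws vsc \<in> K"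
      if cc: "ccirc (E - {\<alpha>}) (cv \<circ> src) (cv \<circ> tgt) ws vsc" and ds: "distinct (take (length ws) vsc)" for ws vsc
      using H1_base[OF cc[unfolded cv_def] ds NP ll aE r1 fE] by (auto simp: K_def I_def cv_def)
    have "y \<in> K" using y[folded cv_def]
    proof (induction rule: arnold_ideal.induct)
      case (gen ws vs)
      note cc = circuit_to_ccirc(1)[OF gen]
      have l2: "length ws \<ge> 2" using ccirc_len2[OF cc NP'] .
      have "Arn r (cv \<circ> src) (cv \<circ> tgt) ws (vs @ [vs ! 0]) \<in> K"
        by (rule arn_induct[OF Kadd Kscl Klm Krm base r1 cc]) auto
      then show ?case using circuit_to_ccirc(2)[OF gen l2] by simp
    next
      case zero then show ?case using Kz by simp
    next
      case (add x y) then show ?case using Kadd by simp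
    next
      case (lmul x y) then show ?case using Klm by simp
    next
      case (rmul x y) then show ?case using Krm by simp
    qed
    then show ?thesis by (simp add: K_def I_def)
  qed
qed

theorem mainTheorem5:
  fixes r :: nat and E :: "('e::linorder) set" and src tgt :: "'e \<Rightarrow> 'v" and \<alpha> :: 'e
  assumes "r \<ge> 1" and "finite E" and "\<forall>e\<in>E. src e \<noteq> tgt e" and "\<alpha> \<in> E"
  shows
    "(\<forall>y. in_lam (E - {\<alpha>}) y \<longrightarrow>
        (\<exists>x. in_lam E x \<and>
           lsub (g_map r E \<alpha> x) y \<in> arnold_ideal r (E - {\<alpha>})
              (contr_vert src tgt \<alpha> \<circ> src) (contr_vert src tgt \<alpha> \<circ> tgt)))
     \<and>
     (\<forall>x. in_lam E x \<longrightarrow>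
        (g_map r E \<alpha> x \<in> arnold_ideal r (E - {\<alpha>})
              (contr_vert src tgt \<alpha> \<circ> src) (contr_vert src tgt \<alpha> \<circ> tgt)
         \<longleftrightarrow> (\<exists>z. in_lam (E - {\<alpha>}) z \<and> lsub x z \<in> arnold_ideal r E src tgt)))"
proof (intro conjI allI impI)
  fix y :: "'e lam" assume y: "in_lam (E - {\<alpha>}) y"
  define x where "x = lmult r y (gen \<alpha>)"
  have xE: "in_lam E x" unfolding x_def
    using in_lam_lmult[OF in_lam_mono[OF y] in_lam_gen[OF assms(4)]] by blast
  have fy: "fin y" using in_lam_fin[OF _ y] assms(2) by simp
  have "g_map r E \<alpha> x = gp r \<alpha> x" by (rule g_map_eq[OF assms(2) xE])
  also have "\<dots> = y" unfolding x_def gp_mult_gen[OF fy] rho_id[OF y] ..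
  finally have "g_map r E \<alpha> x = y" .
  then have "lsub (g_map r E \<alpha> x) y = lzero" by (rule_tac ext) (simp add: lsub_def lzero_def)
  then show "\<exists>x. in_lam E x \<and> lsub (g_map r E \<alpha> x) y \<in> arnold_ideal r (E - {\<alpha>})
              (contr_vert src tgt \<alpha> \<circ> src) (contr_vert src tgt \<alpha> \<circ> tgt)"
    using xE arnold_ideal.zero by metis
next
  fix x :: "'e lam" assume xE: "in_lam E x"
  have fx: "fin x" using in_lam_fin[OF assms(2) xE] .
  show "g_map r E \<alpha> x \<in> arnold_ideal r (E - {\<alpha>}) (contr_vert src tgt \<alpha> \<circ> src) (contr_vert src tgt \<alpha> \<circ> tgt)
         \<longleftrightarrow> (\<exists>z. in_lam (E - {\<alpha>}) z \<and> lsub x z \<in> arnold_ideal r E src tgt)"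
    unfolding g_map_eq[OF assms(2) xE]
  proof
    assume g: "gp r \<alpha> x \<in> arnold_ideal r (E - {\<alpha>}) (contr_vert src tgt \<alpha> \<circ> src) (contr_vert src tgt \<alpha> \<circ> tgt)"
    obtain i where i: "i \<in> arnold_ideal r E src tgt" "gp r \<alpha> x = gp r \<alpha> i"
      using H1[OF assms(2,3,4,1) g] by blast
    define z where "z = lsub (rho \<alpha> x) (rho \<alpha> i)"
    have zl: "in_lam (E - {\<alpha>}) z" unfolding z_def
      using in_lam_rho[OF xE] in_lam_rho[OF ideal_in_lam[OF i(1)]] by simp
    have "lsub x z = i"
    proof (rule ext_rho_gp[where a = \<alpha> and r = r])
      show "rho \<alpha> (lsub x z) = rho \<alpha> i" unfolding z_def
        by (simp add: rho_lsub) (rule ext, simp add: lsub_def)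
      show "gp r \<alpha> (lsub x z) = gp r \<alpha> i" unfolding z_def
        by (simp add: gp_lsub i(2)) (rule ext, simp add: lsub_def lzero_def)
    qed
    then show "\<exists>z. in_lam (E - {\<alpha>}) z \<and> lsub x z \<in> arnold_ideal r E src tgt" using zl i(1) by metis
  next
    assume "\<exists>z. in_lam (E - {\<alpha>}) z \<and> lsub x z \<in> arnold_ideal r E src tgt"
    then obtain z where z: "in_lam (E - {\<alpha>}) z" "lsub x z \<in> arnold_ideal r E src tgt" by blast
    have "gp r \<alpha> (lsub x z) = gp r \<alpha> x"
      unfolding gp_lsub gp_zero[OF z(1)] by (rule ext) (simp add: lsub_def lzero_def)
    then show "gp r \<alpha> x \<in> arnold_ideal r (E - {\<alpha>}) (contr_vert src tgt \<alpha> \<circ> src) (contr_vert src tgt \<alpha> \<circ> tgt)"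
      using H3[OF assms(2,3,1) z(2), of \<alpha>] by simp
  qed
qed

end
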